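(* Every permutation class containing only finitely many simple permutations is finitely based, i.e. its basis is finite.
   Context: A permutation $\pi$ contains $\sigma$ ($\sigma\le\pi$) if some subsequence of $\pi$ has the same relative order as $\sigma$. A permutation class is a downset under $\le$; its basis is the set of $\le$-minimal permutations not in the class. An interval of a permutation is a set of contiguous positions whose values form a contiguous set; a permutation of length $n$ is simple if its only intervals have sizes $0,1,n$. *)

theory Defs
  imports Main
begin

definition is_perm :: "nat list \<Rightarrow> bool" where
  "is_perm p \<longleftrightarrow> distinct p \<and> set p = {0..<length p}"

definition order_iso :: "nat list \<Rightarrow> nat list \<Rightarrow> bool" where
  "order_iso xs ys \<longleftrightarrow> length xs = length ys \<and>
     (\<forall>i < length xs. \<forall>j < length xs. xs ! i < xs ! j \<longleftrightarrow> ys ! i < ys ! j)"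

definition contains :: "nat list \<Rightarrow> nat list \<Rightarrow> bool" (infix "\<preceq>" 50) where
  "\<sigma> \<preceq> \<pi> \<longleftrightarrow> (\<exists>I. I \<subseteq> {0..<length \<pi>} \<and> order_iso \<sigma> (nths \<pi> I))"

definition perm_class :: "nat list set \<Rightarrow> bool" where
  "perm_class C \<longleftrightarrow> (\<forall>\<pi>\<in>C. is_perm \<pi>) \<and>
     (\<forall>\<pi>\<in>C. \<forall>\<sigma>. is_perm \<sigma> \<and> \<sigma> \<preceq> \<pi> \<longrightarrow> \<sigma> \<in> C)"

definition basis :: "nat list set \<Rightarrow> nat list set" where
  "basis C = {\<beta>. is_perm \<beta> \<and> \<beta> \<notin> C \<and>
     (\<forall>\<sigma>. is_perm \<sigma> \<and> \<sigma> \<preceq> \<beta> \<and> \<sigma> \<noteq> \<beta> \<longrightarrow> \<sigma> \<in> C)}"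

definition is_interval :: "nat list \<Rightarrow> nat set \<Rightarrow> bool" where
  "is_interval p S \<longleftrightarrow> (\<exists>i j. S = {i..<j} \<and> j \<le> length p \<and>
     (\<exists>a b. (\<lambda>k. p ! k) ` S = {a..<b}))"

definition simple :: "nat list \<Rightarrow> bool" where
  "simple p \<longleftrightarrow> is_perm p \<and>
     (\<forall>S. is_interval p S \<longrightarrow> card S \<in> {0, 1, length p})"

end

theory Submission
  imports Defs "HOL-Library.Infinite_Set"
begin

definition btw :: "(nat \<Rightarrow> nat) \<Rightarrow> nat \<Rightarrow> nat \<Rightarrow> nat \<Rightarrow> bool" where
  "btw v a q b \<longleftrightarrow> (a<q \<and> q<b) \<or> (b<q \<and> q<a) \<or> (v a<v q \<and> v q<v b) \<or> (v b<v q \<and> v q<v a)"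

definition ivl :: "(nat \<Rightarrow> nat) \<Rightarrow> nat set \<Rightarrow> nat set \<Rightarrow> bool" where
  "ivl v X J \<longleftrightarrow> J \<subseteq> X \<and> (\<forall>q\<in>X-J. \<forall>a\<in>J. \<forall>b\<in>J. \<not> btw v a q b)"

definition smp :: "(nat \<Rightarrow> nat) \<Rightarrow> nat set \<Rightarrow> bool" where
  "smp v X \<longleftrightarrow> (\<forall>J. ivl v X J \<longrightarrow> card J \<le> 1 \<or> J = X)"

lemma btw_sym: "btw v a q b = btw v b q a"
  unfolding btw_def by auto

lemma btw_irr: "\<not> btw v a q a"
  unfolding btw_def by auto

lemma btw_L: "btw v a q b \<Longrightarrow> t \<noteq> q \<Longrightarrow> v t \<noteq> v q \<Longrightarrow> btw v a q t \<or> btw v t q b"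
  unfolding btw_def by (cases "t < q"; cases "v t < v q"; auto)

lemma btw_L2: "btw v a t b \<Longrightarrow> z\<noteq>a \<Longrightarrow> z\<noteq>b \<Longrightarrow> v z\<noteq>v a \<Longrightarrow> v z\<noteq>v b
   \<Longrightarrow> btw v a z b \<or> btw v z a t \<or> btw v t b z"
  unfolding btw_def by (cases "z < a"; cases "z < b"; cases "v z < v a"; cases "v z < v b"; auto)

lemma ivl_restrict: "ivl v X J \<Longrightarrow> Y \<subseteq> X \<Longrightarrow> ivl v Y (J \<inter> Y)"
  unfolding ivl_def by blast

lemma ivl_sub: "ivl v X J \<Longrightarrow> J \<subseteq> Y \<Longrightarrow> Y \<subseteq> X \<Longrightarrow> ivl v Y J"
  unfolding ivl_def by blast

lemma ivl_union:
  assumes "ivl v X J1" "ivl v X J2" "J1 \<inter> J2 \<noteq> {}" "inj_on v X"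
  shows "ivl v X (J1 \<union> J2)"
proof -
  obtain c where c: "c \<in> J1" "c \<in> J2" using assms(3) by blast
  have "\<not> btw v a q b" if q: "q \<in> X - (J1 \<union> J2)" and a: "a \<in> J1 \<union> J2" and b: "b \<in> J1 \<union> J2" for q a b
  proof
    assume h: "btw v a q b"
    have cX: "c \<in> X" "q \<in> X" using c assms(1) q unfolding ivl_def by auto
    have qc: "c \<noteq> q" "v c \<noteq> v q" using cX c q assms(4) unfolding inj_on_def by auto
    from btw_L[OF h qc] have "btw v a q c \<or> btw v c q b" .
    moreover have "\<not> btw v a q c" using a c q assms(1,2) unfolding ivl_def by blast
    moreover have "\<not> btw v c q b" using b c q assms(1,2) unfolding ivl_def by blast
    ultimately show False by blast
  qed
  then show ?thesis using assms(1,2) unfolding ivl_def by blast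
qed

lemma ivl_full: "ivl v X X"
  unfolding ivl_def by auto

lemma ivl_single: "x \<in> X \<Longrightarrow> ivl v X {x}"
  unfolding ivl_def by (auto simp: btw_irr)

lemma ivl_empty: "ivl v X {}"
  unfolding ivl_def by auto

lemma smp_check:
  assumes "X \<subseteq> P" "z \<in> P" "w \<in> P" "z \<notin> X" "w \<notin> X" "z \<noteq> w" "smp v X" "finite X"
    and Y: "Y = insert z (insert w X)"
    and g1: "\<not> ivl v Y X" and g2: "\<not> ivl v Y (insert z X)" and g3: "\<not> ivl v Y (insert w X)"
    and g4: "\<forall>u\<in>X. \<not> ivl v Y {u,z}" and g5: "\<forall>u\<in>X. \<not> ivl v Y {u,w}"
    and g6: "\<not> ivl v Y {z,w}" and g7: "\<forall>u\<in>X. \<not> ivl v Y {u,z,w}"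
  shows "smp v Y"
  unfolding smp_def
proof (intro allI impI)
  fix J assume J: "ivl v Y J"
  have JY: "J \<subseteq> Y" using J unfolding ivl_def by auto
  have "ivl v X (J \<inter> X)" using ivl_restrict[OF J] Y by auto
  then have cJ: "card (J \<inter> X) \<le> 1 \<or> J \<inter> X = X" using assms(7) unfolding smp_def by blast
  have Jd: "J = (J \<inter> X) \<union> (J \<inter> {z,w})" using JY Y by auto
  show "card J \<le> 1 \<or> J = Y"
  proof (cases "J \<inter> X = X")
    case True
    then have "J = X \<or> J = insert z X \<or> J = insert w X \<or> J = Y" using Jd Y by auto
    then show ?thesis using J g1 g2 g3 by auto
  next
    case False
    then have c1: "card (J \<inter> X) \<le> 1" using cJ by auto
    have fin: "finite (J \<inter> X)" using assms(8) by auto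
    have "J \<inter> X = {} \<or> (\<exists>u. J \<inter> X = {u})"
      using c1 fin by (metis card_0_eq card_1_singletonE le_Suc_eq One_nat_def le_zero_eq)
    then show ?thesis
    proof
      assume e: "J \<inter> X = {}"
      then have "J \<subseteq> {z,w}" using Jd by auto
      then have "J = {} \<or> J = {z} \<or> J = {w} \<or> J = {z,w}" by auto
      then show ?thesis using J g6 by auto
    next
      assume "\<exists>u. J \<inter> X = {u}"
      then obtain u where u: "J \<inter> X = {u}" by blast
      then have uX: "u \<in> X" by auto
      have "J \<subseteq> {u,z,w}" using Jd u by auto
      then have "J = {u} \<or> J = {u,z} \<or> J = {u,w} \<or> J = {u,z,w}" using u by auto
      then show ?thesis using J g4 g5 g7 uX by auto
    qed
  qed
qed

locale ERsetup =
  fixes v :: "nat \<Rightarrow> nat" and P X :: "nat set"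
  assumes finP: "finite P" and inj: "inj_on v P" and XP: "X \<subseteq> P" and smpX: "smp v X"
    and cardX: "3 \<le> card X" and smpP: "smp v P" and XneP: "X \<noteq> P"
begin

definition corner where "corner z \<longleftrightarrow> ivl v (insert z X) X"
definition twin where "twin t z \<longleftrightarrow> ivl v (insert z X) {t,z}"

lemma finX: "finite X" using finP XP finite_subset by blast

lemma nonsimple_ext:
  assumes z: "z \<in> P" "z \<notin> X" and ns: "\<not> smp v (insert z X)"
  shows "corner z \<or> (\<exists>t\<in>X. twin t z)"
proof -
  from ns obtain J where J0: "ivl v (insert z X) J" "\<not> (card J \<le> 1 \<or> J = insert z X)"
    unfolding smp_def by blast
  then have J: "ivl v (insert z X) J" "card J > 1" "J \<noteq> insert z X" by auto
  have JY: "J \<subseteq> insert z X" using J unfolding ivl_def by auto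
  have "ivl v X (J \<inter> X)" using ivl_restrict[OF J(1)] by auto
  then have cJ: "card (J \<inter> X) \<le> 1 \<or> J \<inter> X = X" using smpX unfolding smp_def by blast
  show ?thesis
  proof (cases "J \<inter> X = X")
    case True
    then have "J = X" using J(3) JY by auto
    then show ?thesis using J(1) unfolding corner_def by auto
  next
    case False
    then have c1: "card (J \<inter> X) \<le> 1" using cJ by auto
    have finJ: "finite J" using JY finX finite_subset by blast
    have Jd: "J = insert z (J \<inter> X) \<or> J = J \<inter> X" using JY by auto
    have "z \<in> J"
    proof (rule ccontr)
      assume "z \<notin> J" then have "J = J \<inter> X" using JY by auto
      then show False using c1 J(2) by simp
    qed
    then have Jd: "J = insert z (J \<inter> X)" using JY by auto
    have "card J = Suc (card (J \<inter> X))" using Jd finJ z(2)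
      by (metis IntD2 card_insert_disjoint finite_Int)
    then have "card (J \<inter> X) = 1" using J(2) c1 by simp
    then obtain t where "J \<inter> X = {t}" by (metis card_1_singletonE)
    then have "J = {t,z}" "t \<in> X" using Jd by auto
    then show ?thesis using J(1) unfolding twin_def by auto
  qed
qed

lemma injX: "inj_on v (insert z X)" if "z \<in> P" using inj that XP by (meson inj_on_subset insert_subset)

lemma twin_not_corner:
  assumes t: "t \<in> X" and z: "z \<in> P" "z \<notin> X" and tw: "twin t z" and co: "corner z"
  shows False
proof -
  have "ivl v X (X - {t})"
    unfolding ivl_def
  proof (intro conjI ballI)
    fix q a b assume q: "q \<in> X - (X - {t})" and a: "a \<in> X - {t}" and b: "b \<in> X - {t}"
    then have qt: "q = t" by auto
    show "\<not> btw v a q b"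
    proof
      assume h: "btw v a q b"
      have ne: "z \<noteq> a" "z \<noteq> b" "v z \<noteq> v a" "v z \<noteq> v b"
        using a b z inj XP unfolding inj_on_def by auto
      from btw_L2[OF h[unfolded qt] ne] have "btw v a z b \<or> btw v z a t \<or> btw v t b z" .
      moreover have "\<not> btw v a z b" using co a b z unfolding corner_def ivl_def by auto
      moreover have "\<not> btw v z a t" using tw a z unfolding twin_def ivl_def by auto
      moreover have "\<not> btw v t b z" using tw b z unfolding twin_def ivl_def by auto
      ultimately show False by blast
    qed
  qed auto
  then have "card (X - {t}) \<le> 1 \<or> X - {t} = X" using smpX unfolding smp_def by blast
  then show False using t cardX finX by auto
qed

lemma twin_unique:
  assumes "t \<in> X" "s \<in> X" "z \<in> P" "z \<notin> X" "twin t z" "twin s z"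
  shows "s = t"
proof (rule ccontr)
  assume st: "s \<noteq> t"
  have "ivl v (insert z X) ({t,z} \<union> {s,z})"
    using ivl_union assms(5,6) injX[OF assms(3)] unfolding twin_def by blast
  then have "ivl v X (({t,z} \<union> {s,z}) \<inter> X)" using ivl_restrict by blast
  moreover have "({t,z} \<union> {s,z}) \<inter> X = {s,t}" using assms by auto
  ultimately have "ivl v X {s,t}" by simp
  then have "card {s,t} \<le> 1 \<or> {s,t} = X" using smpX unfolding smp_def by blast
  then show False using st cardX by auto
qed

lemma not_corner_between:
  assumes "z \<in> P" "\<not> corner z"
  shows "\<exists>a\<in>X. \<exists>b\<in>X. btw v a z b"
proof -
  have "z \<notin> X" using assms(2) unfolding corner_def ivl_def using insert_absorb by fastforce
  then show ?thesis using assms(2) unfolding corner_def ivl_def by auto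
qed


lemma twin_ivl_sub:
  assumes "ivl v Y {u,z}" "insert z X \<subseteq> Y" "u \<in> X"
  shows "twin u z"
  unfolding twin_def using ivl_sub[OF assms(1)] assms(2,3) by auto

lemma sep_twin:
  assumes w: "w \<in> P" "w \<notin> X" "corner w" and h: "btw v a w b"
    and a: "a \<in> P" "a \<in> X \<or> (\<exists>t\<in>X. twin t a \<and> a \<notin> X)"
    and b: "b \<in> P" "b \<in> X \<or> (\<exists>t\<in>X. twin t b \<and> b \<notin> X)"
  shows "\<exists>t z. t \<in> X \<and> z \<in> P \<and> z \<notin> X \<and> twin t z \<and> btw v t w z"
proof -
  have cw: "\<not> btw v x w y" if "x \<in> X" "y \<in> X" for x y
    using w that unfolding corner_def ivl_def by auto
  have ne: "x \<noteq> w \<and> v x \<noteq> v w" if "x \<in> X" for x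
    using that w inj XP unfolding inj_on_def by auto
  have one: "\<exists>t z. t \<in> X \<and> z \<in> P \<and> z \<notin> X \<and> twin t z \<and> btw v t w z"
    if h: "btw v a w b" and a: "a \<in> P" "t \<in> X" "twin t a" "a \<notin> X" and b: "b \<in> P" "b \<in> X \<or> (\<exists>t\<in>X. twin t b \<and> b \<notin> X)"
    for a b t
  proof -
    from btw_L[OF h, of t] ne[OF a(2)] have "btw v a w t \<or> btw v t w b" by auto
    then show ?thesis
    proof
      assume "btw v a w t" then show ?thesis using a btw_sym by blast
    next
      assume h2: "btw v t w b"
      show ?thesis
      proof (cases "b \<in> X")
        case True then show ?thesis using cw h2 a(2) by blast
      next
        case False
        then obtain tb where tb: "tb \<in> X" "twin tb b" using b by blast
        from btw_L[OF h2, of tb] ne[OF tb(1)] have "btw v t w tb \<or> btw v tb w b" by auto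
        then show ?thesis using cw a(2) tb b False by blast
      qed
    qed
  qed
  show ?thesis
  proof (cases "a \<in> X")
    case False
    then obtain t where "t \<in> X" "twin t a" using a by blast
    then show ?thesis using one[OF h a(1) _ _ False b] by blast
  next
    case aX: True
    show ?thesis
    proof (cases "b \<in> X")
      case True then show ?thesis using cw h aX by blast
    next
      case False
      then obtain t where "t \<in> X" "twin t b" using b by blast
      moreover have "btw v b w a" using h btw_sym by blast
      ultimately show ?thesis using one[of b a t] b(1) False a aX by blast
    qed
  qed
qed

lemma pair_card: "z \<notin> X \<Longrightarrow> w \<notin> X \<Longrightarrow> z \<noteq> w \<Longrightarrow> card (insert z (insert w X)) = card X + 2"
  using finX by auto

lemma ER_common:
  assumes "\<not> (\<exists>z\<in>P-X. smp v (insert z X))"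
  shows "\<forall>z\<in>P-X. corner z \<or> (\<exists>t\<in>X. twin t z)"
  using nonsimple_ext assms by blast

lemma injz: "x \<noteq> y \<Longrightarrow> x \<in> P \<Longrightarrow> y \<in> P \<Longrightarrow> v x \<noteq> v y" using inj unfolding inj_on_def by blast
lemma twnc: "\<not> corner z" if "z \<in> P" "z \<notin> X" "t \<in> X" "twin t z" for z t
    using twin_not_corner that by blast
lemma ncb: "\<exists>a\<in>X. \<exists>b\<in>X. btw v a z b" if "z \<in> P" "\<not> corner z" for z
    using not_corner_between that by blast

lemma ER_case1:
  assumes ext: "\<forall>z\<in>P-X. corner z \<or> (\<exists>t\<in>X. twin t z)" and "\<exists>w\<in>P-X. corner w"
  shows "\<exists>Y. X \<subset> Y \<and> Y \<subseteq> P \<and> card Y \<le> card X + 2 \<and> smp v Y"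
proof -
  from assms(2)
obtain w0 where w0: "w0 \<in> P" "w0 \<notin> X" "corner w0" by blast
  define W where "W = X \<union> {z\<in>P-X. \<not> corner z}"
  have WP: "W \<subseteq> P" "W \<noteq> P" "X \<subseteq> W" using W_def XP w0 by auto
  have "card X \<le> card W" using WP finP by (meson card_mono finite_subset)
  then have "\<not> ivl v P W" using smpP WP cardX unfolding smp_def by fastforce
  then obtain w a b where wab: "w \<in> P" "w \<notin> W" "a \<in> W" "b \<in> W" "btw v a w b"
    using WP unfolding ivl_def by blast
  have w: "w \<notin> X" "corner w" using wab W_def by auto
  have aa: "a \<in> P" "a \<in> X \<or> (\<exists>t\<in>X. twin t a \<and> a \<notin> X)" using wab(3) W_def ext WP by auto
  have bb: "b \<in> P" "b \<in> X \<or> (\<exists>t\<in>X. twin t b \<and> b \<notin> X)" using wab(4) W_def ext WP by auto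
  obtain t z where tz: "t \<in> X" "z \<in> P" "z \<notin> X" "twin t z" "btw v t w z"
    using sep_twin[OF wab(1) w wab(5) aa bb] by blast
  have zc: "\<not> corner z" using twnc tz by blast
  then have zw: "z \<noteq> w" using w by auto
  obtain a1 b1 where ab1: "a1 \<in> X" "b1 \<in> X" "btw v a1 z b1" using ncb[OF tz(2) zc] by blast
  define Y where "Y = insert z (insert w X)"
  have "smp v Y"
  proof (rule smp_check[OF XP tz(2) wab(1) tz(3) w(1) zw smpX finX Y_def])
    show "\<not> ivl v Y X" using ab1 tz(3) unfolding Y_def ivl_def by blast
    show "\<not> ivl v Y (insert z X)" using tz zw w unfolding Y_def ivl_def by blast
    show "\<not> ivl v Y (insert w X)" using ab1 tz(3) zw unfolding Y_def ivl_def by blast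
    show "\<forall>u\<in>X. \<not> ivl v Y {u, z}"
    proof (intro ballI notI)
      fix u assume u: "u \<in> X" and iv: "ivl v Y {u,z}"
      have "twin u z" using twin_ivl_sub[OF iv _ u] Y_def by auto
      then have "u = t" using twin_unique tz u by blast
      then show False using iv tz w zw unfolding Y_def ivl_def by blast
    qed
    show "\<forall>u\<in>X. \<not> ivl v Y {u, w}"
    proof (intro ballI notI)
      fix u assume u: "u \<in> X" and iv: "ivl v Y {u,w}"
      have "twin u w" using twin_ivl_sub[OF iv _ u] Y_def by auto
      then show False using twnc wab(1) w u by blast
    qed
    show "\<not> ivl v Y {z, w}"
    proof
      assume iv: "ivl v Y {z,w}"
      have "btw v a1 w b1 \<or> btw v w a1 z \<or> btw v z b1 w"
        using btw_L2[OF ab1(3), of w] injz[of w a1] injz[of w b1] ab1 w wab(1) XP by auto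
      moreover have "\<not> btw v a1 w b1" using w ab1 unfolding corner_def ivl_def by blast
      moreover have "\<not> btw v w a1 z" using iv ab1 tz w unfolding Y_def ivl_def by auto
      moreover have "\<not> btw v z b1 w" using iv ab1 tz w unfolding Y_def ivl_def by auto
      ultimately show False by blast
    qed
    show "\<forall>u\<in>X. \<not> ivl v Y {u, z, w}"
    proof (intro ballI notI)
      fix u assume u: "u \<in> X" and iv: "ivl v Y {u,z,w}"
      have "insert w X \<subseteq> Y" using Y_def by auto
      then have "ivl v (insert w X) ({u,z,w} \<inter> insert w X)" by (rule ivl_restrict[OF iv])
      moreover have "{u,z,w} \<inter> insert w X = {u,w}" using u tz zw by auto
      ultimately have "twin u w" unfolding twin_def by simp
      then show False using twnc wab(1) w u by blast
    qed
  qed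
  moreover have "X \<subset> Y" "Y \<subseteq> P" "card Y \<le> card X + 2"
    using Y_def tz wab(1) w XP zw pair_card by auto
  ultimately show ?thesis by blast
qed

lemma ER_case2:
  assumes ext: "\<forall>z\<in>P-X. corner z \<or> (\<exists>t\<in>X. twin t z)" and "\<not>(\<exists>w\<in>P-X. corner w)"
  shows "\<exists>Y. X \<subset> Y \<and> Y \<subseteq> P \<and> card Y \<le> card X + 2 \<and> smp v Y"
proof -
  from assms(2)
  have alltw: "\<forall>z\<in>P-X. \<exists>t\<in>X. twin t z" using ext by blast
  obtain z0 where z0: "z0 \<in> P" "z0 \<notin> X" using XP XneP by blast
  obtain t0 where t0: "t0 \<in> X" "twin t0 z0" using alltw z0 by blast
  define A where "A = insert t0 {z\<in>P-X. twin t0 z}"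
  have "\<not> X \<subseteq> {t0}"
  proof
    assume "X \<subseteq> {t0}"
    then have "card X \<le> card {t0}" by (intro card_mono) auto
    then show False using cardX by simp
  qed
  then obtain x1 where x1: "x1 \<in> X" "x1 \<noteq> t0" by blast
  have AP: "A \<subseteq> P" "A \<noteq> P" using A_def t0 XP x1 by auto
  have "card {t0, z0} \<le> card A" using A_def z0 t0 AP finP by (intro card_mono) (auto intro: finite_subset)
  moreover have "card {t0, z0} = 2" using t0 z0 by (cases "t0 = z0") auto
  ultimately have "2 \<le> card A" by simp
  then have "\<not> ivl v P A" using smpP AP unfolding smp_def by fastforce
  then obtain w a b where wab: "w \<in> P" "w \<notin> A" "a \<in> A" "b \<in> A" "btw v a w b"
    using AP unfolding ivl_def by blast
  have Atw: "x = t0 \<or> (x \<in> P \<and> x \<notin> X \<and> twin t0 x)" if "x \<in> A" for x using that A_def by auto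
  have wX: "w \<notin> X"
  proof
    assume wX: "w \<in> X"
    have wt0: "w \<noteq> t0" using wab A_def by auto
    have ntw: "\<not> btw v t0 w x" if "x \<in> P" "x \<notin> X" "twin t0 x" for x
      using that wX wt0 unfolding twin_def ivl_def by auto
    show False
    proof (cases "a = t0")
      case True
      then have "btw v t0 w b" using wab(5) by simp
      moreover have "b = t0 \<or> (b\<in>P \<and> b\<notin>X \<and> twin t0 b)" using Atw[OF wab(4)] .
      ultimately show False using ntw btw_irr[of v t0 w] by blast
    next
      case False
      then have a': "a \<in> P" "a \<notin> X" "twin t0 a" using Atw wab by auto
      from btw_L[OF wab(5), of t0] injz[of t0 w] wt0 t0 wX XP
      have "btw v a w t0 \<or> btw v t0 w b" by auto
      moreover have "\<not> btw v a w t0" using ntw[OF a'] btw_sym[of v a w t0] by simp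
      moreover have "b = t0 \<or> (b\<in>P \<and> b\<notin>X \<and> twin t0 b)" using Atw[OF wab(4)] .
      ultimately show False using ntw btw_irr[of v t0 w] by blast
    qed
  qed
  obtain s where s: "s \<in> X" "twin s w" using alltw wab wX by blast
  have st: "s \<noteq> t0" using s wab wX A_def by auto
  have "\<exists>z. z \<in> P \<and> z \<notin> X \<and> twin t0 z \<and> btw v t0 w z"
  proof (cases "a = t0")
    case True
    then have "b \<noteq> t0" using wab(5) btw_irr[of v t0 w] by auto
    then show ?thesis using True wab Atw by blast
  next
    case False
    then have a': "a \<in> P" "a \<notin> X" "twin t0 a" using Atw wab by auto
    from btw_L[OF wab(5), of t0] injz[of t0 w] t0 wX XP wab(1)
    have "btw v a w t0 \<or> btw v t0 w b" by auto
    moreover have "btw v a w t0 \<Longrightarrow> btw v t0 w a" using btw_sym[of v a w t0] by simp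
    moreover have "b = t0 \<or> (b\<in>P \<and> b\<notin>X \<and> twin t0 b)" using Atw[OF wab(4)] .
    ultimately show ?thesis using a' btw_irr[of v t0 w] by blast
  qed
  then obtain z where z: "z \<in> P" "z \<notin> X" "twin t0 z" "btw v t0 w z" by blast
  have zw: "z \<noteq> w" using z(4) unfolding btw_def by auto
  have szw: "btw v s z w"
  proof -
    have "btw v t0 s z \<or> btw v s t0 w \<or> btw v w z s"
      using btw_L2[OF z(4), of s] s z st injz[of s t0] injz[of s z] XP t0 by auto
    moreover have "\<not> btw v t0 s z" using z s st unfolding twin_def ivl_def by auto
    moreover have "\<not> btw v s t0 w" using s t0 st wX unfolding twin_def ivl_def by auto
    ultimately show ?thesis using btw_sym by blast
  qed
  have zc: "\<not> corner z" using twnc z t0 by blast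
  obtain a1 b1 where ab1: "a1 \<in> X" "b1 \<in> X" "btw v a1 z b1" using ncb[OF z(1) zc] by blast
  define Y where "Y = insert z (insert w X)"
  have "smp v Y"
  proof (rule smp_check[OF XP z(1) wab(1) z(2) wX zw smpX finX Y_def])
    show "\<not> ivl v Y X" using ab1 z(2) unfolding Y_def ivl_def by blast
    show "\<not> ivl v Y (insert z X)" using z zw wX t0 unfolding Y_def ivl_def by blast
    show "\<not> ivl v Y (insert w X)" using szw s z(2) zw unfolding Y_def ivl_def by blast
    show "\<forall>u\<in>X. \<not> ivl v Y {u, z}"
    proof (intro ballI notI)
      fix u assume u: "u \<in> X" and iv: "ivl v Y {u,z}"
      have "twin u z" using twin_ivl_sub[OF iv _ u] Y_def by auto
      then have ut: "u = t0" using twin_unique z t0 u by blast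
      have "w \<in> Y - {u,z}" using Y_def zw wX u by auto
      then have "\<not> btw v u w z" using iv unfolding ivl_def by blast
      then show False using z(4) ut by simp
    qed
    show "\<forall>u\<in>X. \<not> ivl v Y {u, w}"
    proof (intro ballI notI)
      fix u assume u: "u \<in> X" and iv: "ivl v Y {u,w}"
      have "twin u w" using twin_ivl_sub[OF iv _ u] Y_def by auto
      then have us: "u = s" using twin_unique s wab(1) wX u by blast
      have "z \<in> Y - {u,w}" using Y_def zw z(2) u by auto
      then have "\<not> btw v u z w" using iv unfolding ivl_def by blast
      then show False using szw us by simp
    qed
    show "\<not> ivl v Y {z, w}"
    proof
      assume iv: "ivl v Y {z,w}"
      have "ivl v X {t0, s}"
        unfolding ivl_def
      proof (intro conjI ballI)
        fix q a b assume q: "q \<in> X - {t0,s}" and a: "a \<in> {t0,s}" and b: "b \<in> {t0,s}"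
        have nq1: "\<not> btw v t0 q z" using q z unfolding twin_def ivl_def by auto
        have nq2: "\<not> btw v z q w" using q iv z wX unfolding Y_def ivl_def by auto
        have nq3: "\<not> btw v s q w" using q s wX unfolding twin_def ivl_def by auto
        have qX: "q \<in> X" "q \<in> P" using q XP by auto
          then have qz: "q \<noteq> z" "q \<noteq> w" using z(2) wX by auto
          then have "v q \<noteq> v z" "v q \<noteq> v w" using injz[of q z] injz[of q w] qX z(1) wab(1) by auto
          note qz = qz this
        have "\<not> btw v t0 q s"
        proof
          assume h: "btw v t0 q s"
          from btw_L[OF h, of z] qz have "btw v t0 q z \<or> btw v z q s" by auto
          then have "btw v z q s" using nq1 by blast
          from btw_L[OF this, of w] qz have "btw v z q w \<or> btw v w q s" by auto
          then show False using nq2 nq3 btw_sym by blast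
        qed
        then show "\<not> btw v a q b" using a b btw_irr btw_sym by auto
      qed (use t0 s in auto)
      then have "card {t0,s} \<le> 1 \<or> {t0,s} = X" using smpX unfolding smp_def by blast
      then show False using st cardX by auto
    qed
    show "\<forall>u\<in>X. \<not> ivl v Y {u, z, w}"
    proof (intro ballI notI)
      fix u assume u: "u \<in> X" and iv: "ivl v Y {u,z,w}"
      have "insert w X \<subseteq> Y" using Y_def by auto
      then have "ivl v (insert w X) ({u,z,w} \<inter> insert w X)" by (rule ivl_restrict[OF iv])
      moreover have "{u,z,w} \<inter> insert w X = {u,w}" using u z zw by auto
      ultimately have "twin u w" unfolding twin_def by simp
      then have us: "u = s" using twin_unique s wab(1) wX u by blast
      have "insert z X \<subseteq> Y" using Y_def by auto
      then have "ivl v (insert z X) ({u,z,w} \<inter> insert z X)" by (rule ivl_restrict[OF iv])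
      moreover have "{u,z,w} \<inter> insert z X = {u,z}" using u z zw wX by auto
      ultimately have "twin u z" unfolding twin_def by simp
      then have "u = t0" using twin_unique z t0 u by blast
      then show False using us st by simp
    qed
  qed
  moreover have "X \<subset> Y" "Y \<subseteq> P" "card Y \<le> card X + 2"
    using Y_def z wab(1) wX XP zw pair_card by auto
  ultimately show ?thesis by blast
qed

theorem ER: "\<exists>Y. X \<subset> Y \<and> Y \<subseteq> P \<and> card Y \<le> card X + 2 \<and> smp v Y"
proof (cases "\<exists>z\<in>P-X. smp v (insert z X)")
  case True
  then obtain z where z: "z \<in> P" "z \<notin> X" "smp v (insert z X)" by blast
  then show ?thesis using XP finX by (intro exI[of _ "insert z X"]) auto
next
  case False
  then have ext: "\<forall>z\<in>P-X. corner z \<or> (\<exists>t\<in>X. twin t z)" by (rule ER_common)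
  then show ?thesis using ER_case1 ER_case2 by blast
qed

end

lemma ivl_closed: "ivl v X J \<Longrightarrow> x \<in> J \<Longrightarrow> y \<in> J \<Longrightarrow> q \<in> X \<Longrightarrow> btw v x q y \<Longrightarrow> q \<in> J"
  unfolding ivl_def by blast

lemma four_simple:
  assumes pos: "p0 < p1" "p1 < p2" "p2 < p3" and val: "v p1 < v p3" "v p3 < v p0" "v p0 < v p2"
  shows "smp v {p0,p1,p2,p3}"
  unfolding smp_def
proof (intro allI impI)
  fix J assume J: "ivl v {p0,p1,p2,p3} J"
  let ?T = "{p0,p1,p2,p3}"
  have JT: "J \<subseteq> ?T" using J unfolding ivl_def by auto
  have cl: "\<And>x y q. x \<in> J \<Longrightarrow> y \<in> J \<Longrightarrow> q \<in> ?T \<Longrightarrow> btw v x q y \<Longrightarrow> q \<in> J"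
    using ivl_closed[OF J] by blast
  have i01: "p0 \<in> J \<Longrightarrow> p1 \<in> J \<Longrightarrow> p3 \<in> J" using cl[of p0 p1 p3] pos val unfolding btw_def by auto
  have i03: "p0 \<in> J \<Longrightarrow> p3 \<in> J \<Longrightarrow> p1 \<in> J \<and> p2 \<in> J"
    using cl[of p0 p3 p1] cl[of p0 p3 p2] pos val unfolding btw_def by auto
  have i02: "p0 \<in> J \<Longrightarrow> p2 \<in> J \<Longrightarrow> p1 \<in> J" using cl[of p0 p2 p1] pos val unfolding btw_def by auto
  have i12: "p1 \<in> J \<Longrightarrow> p2 \<in> J \<Longrightarrow> p3 \<in> J \<and> p0 \<in> J"
    using cl[of p1 p2 p3] cl[of p1 p2 p0] pos val unfolding btw_def by auto
  have i13: "p1 \<in> J \<Longrightarrow> p3 \<in> J \<Longrightarrow> p2 \<in> J" using cl[of p1 p3 p2] pos val unfolding btw_def by auto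
  have i23: "p2 \<in> J \<Longrightarrow> p3 \<in> J \<Longrightarrow> p0 \<in> J" using cl[of p2 p3 p0] pos val unfolding btw_def by auto
  show "card J \<le> 1 \<or> J = ?T"
  proof (cases "\<exists>x\<in>J. \<exists>y\<in>J. x \<noteq> y")
    case True
    then obtain x y where xy: "x \<in> J" "y \<in> J" "x \<noteq> y" by blast
    then have "x \<in> ?T" "y \<in> ?T" using JT by auto
    have xs: "x = p0 \<or> x = p1 \<or> x = p2 \<or> x = p3" "y = p0 \<or> y = p1 \<or> y = p2 \<or> y = p3"
      using \<open>x \<in> ?T\<close> \<open>y \<in> ?T\<close> by auto
    have "(p0 \<in> J \<and> p3 \<in> J) \<or> (p1 \<in> J \<and> p2 \<in> J)"
      using xs xy i01 i03 i02 i12 i13 i23 by (elim disjE) blast+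
    then have "p0 \<in> J \<and> p1 \<in> J \<and> p2 \<in> J \<and> p3 \<in> J"
      using i03 i12 by blast
    then show ?thesis using JT by auto
  next
    case False
    have "finite J" using JT finite_subset by blast
    then have "card J \<le> Suc 0" using False card_le_Suc0_iff_eq[of J] by blast
    then show ?thesis by simp
  qed
qed

lemma btw_compl:
  assumes "v a \<le> K" "v q \<le> K" "v b \<le> K"
  shows "btw (\<lambda>i. K - v i) a q b = btw v a q b"
  using assms unfolding btw_def by auto

lemma ivl_compl:
  assumes "\<forall>i\<in>X. v i \<le> K"
  shows "ivl (\<lambda>i. K - v i) X J = ivl v X J"
proof -
  have eq: "btw (\<lambda>i. K - v i) a q b = btw v a q b" if "q \<in> X" "a \<in> X" "b \<in> X" for a q b
    using btw_compl[of v a K q b] assms that by blast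
  show ?thesis
    unfolding ivl_def
  proof (rule conj_cong[OF refl])
    assume JX: "J \<subseteq> X"
    show "(\<forall>q\<in>X - J. \<forall>a\<in>J. \<forall>b\<in>J. \<not> btw (\<lambda>i. K - v i) a q b) = (\<forall>q\<in>X - J. \<forall>a\<in>J. \<forall>b\<in>J. \<not> btw v a q b)"
    proof (intro ball_cong refl)
      fix q a b assume "q \<in> X - J" "a \<in> J" "b \<in> J"
      then show "(\<not> btw (\<lambda>i. K - v i) a q b) = (\<not> btw v a q b)" using eq[of q a b] JX by blast
    qed
  qed
qed

lemma smp_compl:
  assumes "\<forall>i\<in>X. v i \<le> K"
  shows "smp (\<lambda>i. K - v i) X = smp v X"
  unfolding smp_def using ivl_compl[OF assms] by simp

lemma base_case:
  assumes n: "4 \<le> n" and inj: "inj_on v {0..<n}" and sP: "smp v {0..<n}" and v10: "v 1 < v 0"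
  shows "\<exists>T \<subseteq> {0..<n}. card T = 4 \<and> smp v T"
proof -
  let ?P = "{0..<n::nat}"
  have injz: "v x \<noteq> v y" if "x \<noteq> y" "x < n" "y < n" for x y
    using inj_on_contraD[OF inj that(1)] that(2,3) by auto
  define B where "B = {i\<in>?P. v 0 < v i}"
  have Bne: "B \<noteq> {}"
  proof
    assume Be: "B = {}"
    have lt: "v i < v 0" if "i \<in> ?P" "i \<noteq> 0" for i
      using Be that injz[of i 0] n unfolding B_def by force
    have "ivl v ?P (?P - {0})"
      unfolding ivl_def
    proof (intro conjI ballI)
      fix q a b assume q: "q \<in> ?P - (?P - {0})" and a: "a \<in> ?P - {0}" and b: "b \<in> ?P - {0}"
      then have "q = 0" by auto
      then show "\<not> btw v a q b" using lt[of a] lt[of b] a b unfolding btw_def by auto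
    qed auto
    moreover have "card (?P - {0}) = n - 1" using n by simp
    ultimately show False using sP n unfolding smp_def by fastforce
  qed
  define b0 where "b0 = Min B"
  have finB: "finite B" unfolding B_def by auto
  have b0B: "b0 \<in> B" using Bne finB b0_def by auto
  have b0min: "\<And>i. i \<in> B \<Longrightarrow> b0 \<le> i" using finB b0_def by auto
  have b0n: "b0 < n" "v 0 < v b0" using b0B B_def by auto
  have b0g: "2 \<le> b0"
  proof -
    have "b0 \<noteq> 0" using b0n(2) by (metis less_irrefl)
    moreover have "b0 \<noteq> 1" using b0n v10 by auto
    ultimately show ?thesis by auto
  qed
  have before: "v i < v 0" if "0 < i" "i < b0" for i
  proof -
    have "i \<notin> B" using b0min that by force
    then show ?thesis using that b0n injz[of i 0] unfolding B_def by force
  qed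
  show ?thesis
  proof (cases "\<exists>a c. 0 < a \<and> a < b0 \<and> b0 < c \<and> c < n \<and> v a < v c \<and> v c < v 0")
    case True
    then obtain a c where ac: "0 < a" "a < b0" "b0 < c" "c < n" "v a < v c" "v c < v 0" by blast
    have "smp v {0,a,b0,c}" by (rule four_simple) (use ac b0n in auto)
    moreover have "card {0,a,b0,c} = 4" using ac by auto
    moreover have "{0,a,b0,c} \<subseteq> ?P" using ac by auto
    ultimately show ?thesis by blast
  next
    case False
    have "ivl v ?P {0..<b0}"
      unfolding ivl_def
    proof (intro conjI ballI)
      fix q a b assume q: "q \<in> ?P - {0..<b0}" and a: "a \<in> {0..<b0}" and b: "b \<in> {0..<b0}"
      have va: "v a \<le> v 0" using before[of a] a by (cases "a = 0") auto
      have vb: "v b \<le> v 0" using before[of b] b by (cases "b = 0") auto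
      show "\<not> btw v a q b"
      proof
        assume h: "btw v a q b"
        have qb: "b0 \<le> q" "q < n" using q by auto
        then have "\<not> (a < q \<and> q < b) \<and> \<not> (b < q \<and> q < a)" using a b by auto
        then have hv: "(v a < v q \<and> v q < v b) \<or> (v b < v q \<and> v q < v a)" using h unfolding btw_def by auto
        then have vq: "v q < v 0" using va vb by auto
        then have "q \<noteq> b0" using b0n by auto
        then have qb0: "b0 < q" using qb by auto
        show False
        proof (cases "v a < v q")
          case True
          have "a \<noteq> 0" proof assume "a = 0" with True vq show False by simp qed
          then show False using False True vq qb0 qb a by auto
        next
          case f2: False
          then have vbq: "v b < v q" using hv by auto
          moreover have "b \<noteq> 0" proof assume "b = 0" with vbq vq show False by simp qed
          ultimately show False using False vq qb0 qb b by auto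
        qed
      qed
    qed (use b0n in auto)
    moreover have "card {0..<b0} = b0" by simp
    moreover have "{0..<b0} \<noteq> ?P" using b0n by auto
    ultimately show ?thesis using sP b0g unfolding smp_def by fastforce
  qed
qed

lemma base4:
  assumes n: "4 \<le> n" and inj: "inj_on v {0..<n}" and sP: "smp v {0..<n}"
  shows "\<exists>T \<subseteq> {0..<n}. card T = 4 \<and> smp v T"
proof (cases "v 1 < v 0")
  case True then show ?thesis using base_case assms by blast
next
  case False
  define K where "K = Max (v ` {0..<n})"
  have bnd: "\<forall>i\<in>{0..<n}. v i \<le> K" unfolding K_def by auto
  define w where "w = (\<lambda>i. K - v i)"
  have "inj_on w {0..<n}" unfolding inj_on_def
  proof (intro ballI impI)
    fix x y assume xy: "x \<in> {0..<n}" "y \<in> {0..<n}" "w x = w y"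
    then have "v x = v y" using bnd unfolding w_def by (metis diff_diff_cancel)
    then show "x = y" using inj xy unfolding inj_on_def by blast
  qed
  moreover have "smp w {0..<n}" using sP smp_compl[OF bnd] w_def by simp
  moreover have "w 1 < w 0"
  proof -
    have "v 1 \<noteq> v 0" using inj n unfolding inj_on_def by force
    then have "v 0 < v 1" using False by auto
    moreover have "v 1 \<le> K" using bnd n by auto
    ultimately show ?thesis unfolding w_def by linarith
  qed
  ultimately obtain T where T: "T \<subseteq> {0..<n}" "card T = 4" "smp w T" using base_case n by blast
  have "\<forall>i\<in>T. v i \<le> K" using bnd T by auto
  then have "smp v T" using T(3) smp_compl[of T v K] unfolding w_def by simp
  then show ?thesis using T by blast
qed

theorem weak_ST:
  assumes inj: "inj_on v {0..<n}" and sP: "smp v {0..<n}"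
    and small: "\<forall>T. T \<subseteq> {0..<n} \<and> T \<noteq> {0..<n} \<and> smp v T \<longrightarrow> card T \<le> m"
  shows "n \<le> max 4 (m + 2)"
proof (rule ccontr)
  assume "\<not> n \<le> max 4 (m + 2)"
  then have n: "5 \<le> n" "m + 2 < n" by auto
  let ?P = "{0..<n::nat}"
  obtain T0 where T0: "T0 \<subseteq> ?P" "card T0 = 4" "smp v T0" using base4[OF _ inj sP] n by auto
  have T0ne: "T0 \<noteq> ?P" using T0 n by auto
  define S where "S = (\<lambda>T. T \<subseteq> ?P \<and> T \<noteq> ?P \<and> smp v T \<and> 3 \<le> card T)"
  have "S T0" using T0 T0ne S_def by auto
  moreover have "\<forall>T. S T \<longrightarrow> card T < Suc n"
  proof (intro allI impI)
    fix T assume "S T"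
    then have "card T \<le> card ?P" unfolding S_def by (intro card_mono) auto
    then show "card T < Suc n" by simp
  qed
  ultimately obtain T where T: "S T" and Tmax: "\<forall>T'. S T' \<longrightarrow> card T' \<le> card T"
    using Lattices_Big.ex_has_greatest_nat[of S T0 card "Suc n"] by blast
  have TT: "T \<subseteq> ?P" "T \<noteq> ?P" "smp v T" "3 \<le> card T" using T S_def by auto
  interpret E: ERsetup v ?P T
    by unfold_locales (use inj sP TT in auto)
  obtain Y where Y: "T \<subset> Y" "Y \<subseteq> ?P" "card Y \<le> card T + 2" "smp v Y" using E.ER by blast
  have cTY: "card T < card Y" using Y(1,2) by (meson finite_atLeastLessThan finite_subset psubset_card_mono)
  show False
  proof (cases "Y = ?P")
    case True
    then have "n \<le> card T + 2" using Y(3) by simp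
    moreover have "card T \<le> m" using small TT by blast
    ultimately show False using n by simp
  next
    case False
    then have "S Y" using Y TT cTY S_def by auto
    then show False using Tmax cTY by fastforce
  qed
qed

definition emb_on :: "nat list \<Rightarrow> nat set \<Rightarrow> nat list \<Rightarrow> nat set \<Rightarrow> (nat \<Rightarrow> nat) \<Rightarrow> bool" where
  "emb_on p A q B h \<longleftrightarrow> (\<forall>i\<in>A. h i \<in> B) \<and> (\<forall>i\<in>A. \<forall>j\<in>A. i < j \<longrightarrow> h i < h j)
     \<and> (\<forall>i\<in>A. \<forall>j\<in>A. p!i < p!j \<longleftrightarrow> q!(h i) < q!(h j))"

definition enum :: "nat set \<Rightarrow> nat \<Rightarrow> nat" where
  "enum K i = sorted_list_of_set K ! i"

definition idx :: "nat set \<Rightarrow> nat \<Rightarrow> nat" where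
  "idx K i = card {j\<in>K. j < i}"

lemma enum_mono: "finite K \<Longrightarrow> i < j \<Longrightarrow> j < card K \<Longrightarrow> enum K i < enum K j"
  unfolding enum_def using sorted_wrt_nth_less[OF strict_sorted_list_of_set, of i j K]
  by (simp add: length_sorted_list_of_set)

lemma enum_in: "finite K \<Longrightarrow> i < card K \<Longrightarrow> enum K i \<in> K"
  unfolding enum_def by (metis length_sorted_list_of_set nth_mem set_sorted_list_of_set)

lemma enum_surj: "finite K \<Longrightarrow> x \<in> K \<Longrightarrow> \<exists>i < card K. enum K i = x"
  unfolding enum_def by (metis in_set_conv_nth length_sorted_list_of_set set_sorted_list_of_set)

lemma enum_image: "finite K \<Longrightarrow> enum K ` {0..<card K} = K"
  using enum_in enum_surj by fastforce

lemma enum_less_iff: "finite K \<Longrightarrow> i < card K \<Longrightarrow> j < card K \<Longrightarrow> enum K i < enum K j \<longleftrightarrow> i < j"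
  using enum_mono by (metis less_asym linorder_neqE_nat)

lemma idx_enum: "finite K \<Longrightarrow> i < card K \<Longrightarrow> idx K (enum K i) = i"
proof -
  assume fin: "finite K" and i: "i < card K"
  have "{j\<in>K. j < enum K i} = enum K ` {0..<i}"
  proof
    show "{j \<in> K. j < enum K i} \<subseteq> enum K ` {0..<i}"
    proof
      fix j assume j: "j \<in> {j \<in> K. j < enum K i}"
      then obtain k where k: "k < card K" "enum K k = j" using enum_surj fin by blast
      then have "k < i" using enum_less_iff[OF fin k(1) i] j by auto
      then show "j \<in> enum K ` {0..<i}" using k by auto
    qed
    show "enum K ` {0..<i} \<subseteq> {j \<in> K. j < enum K i}"
      using enum_in enum_mono fin i by auto
  qed
  moreover have "inj_on (enum K) {0..<i}"
  proof (rule inj_onI)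
    fix x y assume xy: "x \<in> {0..<i}" "y \<in> {0..<i}" "enum K x = enum K y"
    then have "x < card K" "y < card K" using i by auto
    then show "x = y" using xy(3) enum_less_iff[OF fin, of x y] enum_less_iff[OF fin, of y x]
      by (cases x y rule: linorder_cases) auto
  qed
  ultimately show ?thesis unfolding idx_def by (simp add: card_image)
qed

lemma enum_idx: "finite K \<Longrightarrow> x \<in> K \<Longrightarrow> enum K (idx K x) = x"
  using enum_surj idx_enum by metis

lemma idx_less: "finite K \<Longrightarrow> x \<in> K \<Longrightarrow> idx K x < card K"
  using enum_surj idx_enum by metis

lemma idx_less_iff: "finite K \<Longrightarrow> x \<in> K \<Longrightarrow> y \<in> K \<Longrightarrow> idx K x < idx K y \<longleftrightarrow> x < y"
  by (metis enum_idx enum_less_iff idx_less)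

lemma idx_mono: "finite K \<Longrightarrow> x \<le> y \<Longrightarrow> idx K x \<le> idx K y"
  unfolding idx_def by (intro card_mono) auto

lemma nths_conv: "K \<subseteq> {0..<length xs} \<Longrightarrow> nths xs K = map ((!) xs) (sorted_list_of_set K)"
proof -
  assume K: "K \<subseteq> {0..<length xs}"
  have z: "zip xs [0..<length xs] = map (\<lambda>i. (xs!i, i)) [0..<length xs]"
    by (rule nth_equalityI) auto
  have "nths xs K = map ((!) xs) (filter (\<lambda>i. i \<in> K) [0..<length xs])"
    unfolding nths_def z by (simp add: filter_map comp_def)
  moreover have "filter (\<lambda>i. i \<in> K) [0..<length xs] = sorted_list_of_set K"
  proof -
    have fin: "finite K" using K finite_subset by blast
    have "sorted_wrt (<) (filter (\<lambda>i. i \<in> K) [0..<length xs])"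
      by (rule sorted_wrt_filter) (simp add: sorted_wrt_upt)
    moreover have "set (filter (\<lambda>i. i \<in> K) [0..<length xs]) = K" using K by auto
    moreover have "length (filter (\<lambda>i. i \<in> K) [0..<length xs]) = card K"
      by (metis calculation(2) distinct_card distinct_filter distinct_upt)
    ultimately have "sorted_list_of_set K = filter (\<lambda>i. i \<in> K) [0..<length xs]"
      by (intro iffD1[OF sorted_list_of_set_unique[OF fin]] conjI)
    then show ?thesis by simp
  qed
  ultimately show ?thesis by simp
qed

lemma nth_nths_enum: "K \<subseteq> {0..<length xs} \<Longrightarrow> i < card K \<Longrightarrow> nths xs K ! i = xs ! enum K i"
  by (simp add: nths_conv enum_def length_sorted_list_of_set)

lemma length_nths_sub: "K \<subseteq> {0..<length xs} \<Longrightarrow> length (nths xs K) = card K"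
  by (simp add: nths_conv length_sorted_list_of_set)

lemma contains_emb: "\<sigma> \<preceq> \<pi> \<longleftrightarrow> (\<exists>h. emb_on \<sigma> {0..<length \<sigma>} \<pi> {0..<length \<pi>} h)"
proof
  assume "\<sigma> \<preceq> \<pi>"
  then obtain I where I: "I \<subseteq> {0..<length \<pi>}" "order_iso \<sigma> (nths \<pi> I)" unfolding contains_def by blast
  have fin: "finite I" using I finite_subset by blast
  have len: "length \<sigma> = card I" using I length_nths_sub unfolding order_iso_def by metis
  have "emb_on \<sigma> {0..<length \<sigma>} \<pi> {0..<length \<pi>} (enum I)"
    unfolding emb_on_def
  proof (intro conjI ballI impI)
    fix i assume "i \<in> {0..<length \<sigma>}" then have "enum I i \<in> I" using enum_in fin len by auto
    then show "enum I i \<in> {0..<length \<pi>}" using I by blast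
  next
    fix i j assume "i \<in> {0..<length \<sigma>}" "j \<in> {0..<length \<sigma>}" "i < j"
    then show "enum I i < enum I j" using enum_mono fin len by auto
  next
    fix i j assume ij: "i \<in> {0..<length \<sigma>}" "j \<in> {0..<length \<sigma>}"
    then show "\<sigma> ! i < \<sigma> ! j \<longleftrightarrow> \<pi> ! enum I i < \<pi> ! enum I j"
      using I(2) nth_nths_enum[OF I(1)] len unfolding order_iso_def by auto
  qed
  then show "\<exists>h. emb_on \<sigma> {0..<length \<sigma>} \<pi> {0..<length \<pi>} h" by blast
next
  assume "\<exists>h. emb_on \<sigma> {0..<length \<sigma>} \<pi> {0..<length \<pi>} h"
  then obtain h where h: "emb_on \<sigma> {0..<length \<sigma>} \<pi> {0..<length \<pi>} h" by blast
  let ?k = "length \<sigma>"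
  define I where "I = h ` {0..<?k}"
  have I: "I \<subseteq> {0..<length \<pi>}" using h unfolding emb_on_def I_def by auto
  have fin: "finite I" unfolding I_def by auto
  have "sorted_list_of_set I = map h [0..<?k]"
  proof -
    have "sorted_wrt (<) (map h [0..<?k])"
      unfolding sorted_wrt_map using h unfolding emb_on_def
      by (auto intro!: sorted_wrt_mono_rel[OF _ sorted_wrt_upt[of 0 ?k]])
    moreover have "set (map h [0..<?k]) = I" unfolding I_def by auto
    moreover have "length (map h [0..<?k]) = card I"
      by (metis calculation distinct_card length_map strict_sorted_iff)
    ultimately show ?thesis
      by (intro iffD1[OF sorted_list_of_set_unique[OF fin]] conjI)
  qed
  then have nn: "nths \<pi> I = map (\<lambda>i. \<pi> ! h i) [0..<?k]" using nths_conv[OF I] by simp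
  have "order_iso \<sigma> (nths \<pi> I)"
    unfolding order_iso_def nn using h unfolding emb_on_def by auto
  then show "\<sigma> \<preceq> \<pi>" using I unfolding contains_def by blast
qed

lemma emb_comp: "emb_on p A q B h \<Longrightarrow> emb_on q B r C g \<Longrightarrow> emb_on p A r C (g \<circ> h)"
  unfolding emb_on_def by auto

lemma emb_sub: "emb_on p A q B h \<Longrightarrow> A' \<subseteq> A \<Longrightarrow> B \<subseteq> B' \<Longrightarrow> emb_on p A' q B' h"
  unfolding emb_on_def by blast

lemma emb_id: "emb_on p A p A id"
  unfolding emb_on_def by auto

lemma contains_trans: "a \<preceq> b \<Longrightarrow> b \<preceq> c \<Longrightarrow> a \<preceq> c"
  unfolding contains_emb using emb_comp by blast

lemma contains_refl: "a \<preceq> a"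
  unfolding contains_emb using emb_id by blast

lemma emb_nths_enum: "K \<subseteq> {0..<length p} \<Longrightarrow> emb_on (nths p K) {0..<card K} p K (enum K)"
proof -
  assume K: "K \<subseteq> {0..<length p}"
  have fin: "finite K" using K finite_subset by blast
  show ?thesis unfolding emb_on_def using enum_in[OF fin] enum_mono[OF fin] nth_nths_enum[OF K]
    by auto
qed

lemma emb_nths_idx: "K \<subseteq> {0..<length p} \<Longrightarrow> emb_on p K (nths p K) {0..<card K} (idx K)"
proof -
  assume K: "K \<subseteq> {0..<length p}"
  have fin: "finite K" using K finite_subset by blast
  show ?thesis unfolding emb_on_def
  proof (intro conjI ballI impI)
    fix i assume "i \<in> K" then show "idx K i \<in> {0..<card K}" using idx_less fin by auto
  next
    fix i j assume "i \<in> K" "j \<in> K" "i < j" then show "idx K i < idx K j" using idx_less_iff fin by auto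
  next
    fix i j assume ij: "i \<in> K" "j \<in> K"
    then show "p ! i < p ! j \<longleftrightarrow> nths p K ! idx K i < nths p K ! idx K j"
      using nth_nths_enum[OF K] idx_less[OF fin] enum_idx[OF fin] by simp
  qed
qed

lemma contains_nths: "K \<subseteq> {0..<length p} \<Longrightarrow> nths p K \<preceq> p"
  unfolding contains_def using order_iso_def by blast

lemma nths_contains_emb:
  assumes A: "A \<subseteq> {0..<length p}" and B: "B \<subseteq> {0..<length q}"
  shows "nths p A \<preceq> nths q B \<longleftrightarrow> (\<exists>h. emb_on p A q B h)"
proof
  assume "nths p A \<preceq> nths q B"
  then obtain g where g: "emb_on (nths p A) {0..<card A} (nths q B) {0..<card B} g"
    unfolding contains_emb using length_nths_sub A B by metis
  have "emb_on p A q B (enum B \<circ> (g \<circ> idx A))"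
    using emb_comp[OF emb_nths_idx[OF A] emb_comp[OF g emb_nths_enum[OF B]]] by (simp add: comp_assoc)
  then show "\<exists>h. emb_on p A q B h" by blast
next
  assume "\<exists>h. emb_on p A q B h"
  then obtain h where h: "emb_on p A q B h" by blast
  have "emb_on (nths p A) {0..<card A} (nths q B) {0..<card B} (idx B \<circ> (h \<circ> enum A))"
    using emb_comp[OF emb_nths_enum[OF A] emb_comp[OF h emb_nths_idx[OF B]]] by (simp add: comp_assoc)
  then show "nths p A \<preceq> nths q B" unfolding contains_emb using length_nths_sub A B by metis
qed

lemma emb_less_iff: "emb_on p A q B h \<Longrightarrow> i \<in> A \<Longrightarrow> j \<in> A \<Longrightarrow> h i < h j \<longleftrightarrow> i < j"
  unfolding emb_on_def by (metis less_asym linorder_neqE_nat)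

lemma emb_inj: "emb_on p A q B h \<Longrightarrow> inj_on h A"
proof (rule inj_onI)
  fix x y assume h: "emb_on p A q B h" and xy: "x \<in> A" "y \<in> A" "h x = h y"
  show "x = y" using emb_less_iff[OF h xy(1,2)] emb_less_iff[OF h xy(2,1)] xy(3)
    by (cases x y rule: linorder_cases) auto
qed

lemma btw_emb:
  assumes h: "emb_on p A q B h" and "a \<in> A" "x \<in> A" "b \<in> A"
  shows "btw ((!) p) a x b \<longleftrightarrow> btw ((!) q) (h a) (h x) (h b)"
proof -
  have v: "\<And>i j. i \<in> A \<Longrightarrow> j \<in> A \<Longrightarrow> p!i < p!j \<longleftrightarrow> q!(h i) < q!(h j)" using h unfolding emb_on_def by blast
  have e1: "(h a < h x) = (a < x)" "(h x < h b) = (x < b)" "(h b < h x) = (b < x)" "(h x < h a) = (x < a)"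
    using emb_less_iff[OF h] assms(2-4) by blast+
  have v1: "(p!a < p!x) = (q!(h a) < q!(h x))" "(p!x < p!b) = (q!(h x) < q!(h b))"
     "(p!b < p!x) = (q!(h b) < q!(h x))" "(p!x < p!a) = (q!(h x) < q!(h a))"
    using v assms(2-4) by blast+
  show ?thesis by (simp only: btw_def e1 v1)
qed

lemma ivl_emb:
  assumes h: "emb_on p A q B h" and JT: "J \<subseteq> T" and TA: "T \<subseteq> A"
  shows "ivl ((!) p) T J \<longleftrightarrow> ivl ((!) q) (h ` T) (h ` J)"
proof -
  have inj: "inj_on h A" using emb_inj[OF h] .
  have bt: "\<And>a x b. a \<in> T \<Longrightarrow> x \<in> T \<Longrightarrow> b \<in> T \<Longrightarrow> btw ((!) p) a x b \<longleftrightarrow> btw ((!) q) (h a) (h x) (h b)"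
    using btw_emb[OF h] TA by blast
  have diff: "h ` T - h ` J = h ` (T - J)" 
  proof -
    have "T - J \<subseteq> A" "J \<subseteq> A" using JT TA by auto
    then show ?thesis using inj_on_image_set_diff[OF inj] by blast
  qed
  show ?thesis
  proof
    assume iv: "ivl ((!) p) T J"
    show "ivl ((!) q) (h ` T) (h ` J)"
      unfolding ivl_def
    proof (intro conjI ballI)
      fix q' a' b' assume q': "q' \<in> h ` T - h ` J" and a': "a' \<in> h ` J" and b': "b' \<in> h ` J"
      obtain x where x: "x \<in> T - J" "q' = h x" using q' diff by auto
      obtain a where a: "a \<in> J" "a' = h a" using a' by auto
      obtain b where b: "b \<in> J" "b' = h b" using b' by auto
      have "\<not> btw ((!) p) a x b" using iv x a b unfolding ivl_def by blast
      then show "\<not> btw ((!) q) a' q' b'" using bt[of a x b] x a b JT by auto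
    qed (use JT in auto)
  next
    assume iv: "ivl ((!) q) (h ` T) (h ` J)"
    show "ivl ((!) p) T J"
      unfolding ivl_def
    proof (intro conjI ballI)
      fix x a b assume x: "x \<in> T - J" and a: "a \<in> J" and b: "b \<in> J"
      have "h x \<in> h ` T - h ` J" using diff x by auto
      then have "\<not> btw ((!) q) (h a) (h x) (h b)" using iv a b unfolding ivl_def by blast
      then show "\<not> btw ((!) p) a x b" using bt[of a x b] x a b JT by auto
    qed (use JT in auto)
  qed
qed

lemma smp_emb:
  assumes h: "emb_on p A q B h" and TA: "T \<subseteq> A"
  shows "smp ((!) p) T \<longleftrightarrow> smp ((!) q) (h ` T)"
proof -
  have inj: "inj_on h T" using emb_inj[OF h] TA inj_on_subset by blast
  show ?thesis
  proof
    assume s: "smp ((!) p) T"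
    show "smp ((!) q) (h ` T)"
      unfolding smp_def
    proof (intro allI impI)
      fix J' assume J': "ivl ((!) q) (h ` T) J'"
      define J where "J = {x\<in>T. h x \<in> J'}"
      have JT: "J \<subseteq> T" unfolding J_def by auto
      have hJ: "h ` J = J'" using J' unfolding J_def ivl_def by auto
      have "ivl ((!) p) T J" using ivl_emb[OF h JT TA] J' hJ by simp
      then have "card J \<le> 1 \<or> J = T" using s unfolding smp_def by blast
      moreover have "card J' = card J" using hJ inj JT by (metis card_image inj_on_subset)
      ultimately show "card J' \<le> 1 \<or> J' = h ` T" using hJ by auto
    qed
  next
    assume s: "smp ((!) q) (h ` T)"
    show "smp ((!) p) T"
      unfolding smp_def
    proof (intro allI impI)
      fix J assume J: "ivl ((!) p) T J"
      then have JT: "J \<subseteq> T" unfolding ivl_def by auto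
      have "ivl ((!) q) (h ` T) (h ` J)" using ivl_emb[OF h JT TA] J by simp
      then have "card (h ` J) \<le> 1 \<or> h ` J = h ` T" using s unfolding smp_def by blast
      moreover have "card (h ` J) = card J" using inj JT by (metis card_image inj_on_subset)
      moreover have "h ` J = h ` T \<Longrightarrow> J = T" using inj JT by (metis inj_on_image_eq_iff order_refl)
      ultimately show "card J \<le> 1 \<or> J = T" by auto
    qed
  qed
qed

definition rk :: "nat list \<Rightarrow> nat set \<Rightarrow> nat \<Rightarrow> nat" where
  "rk p K k = card {j\<in>K. p!j < p!k}"

lemma rk_less:
  assumes K: "K \<subseteq> {0..<length p}" and d: "distinct p" and a: "a \<in> K" and b: "b \<in> K"
  shows "rk p K a < rk p K b \<longleftrightarrow> p!a < p!b"
proof -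
  have fin: "finite K" using K finite_subset by blast
  have one: "rk p K x < rk p K y" if "x \<in> K" "y \<in> K" "p!x < p!y" for x y
  proof -
    have "{j\<in>K. p!j < p!x} \<subset> {j\<in>K. p!j < p!y}" using that by auto
    then show ?thesis unfolding rk_def using fin by (intro psubset_card_mono) auto
  qed
  show ?thesis
  proof
    assume h: "rk p K a < rk p K b"
    show "p!a < p!b"
    proof (rule ccontr)
      assume "\<not> p!a < p!b"
      then have "p!b < p!a \<or> p!a = p!b" by auto
      then show False
      proof
        assume "p!b < p!a" then show False using one[OF b a] h by auto
      next
        assume "p!a = p!b"
        moreover have "a < length p" "b < length p" using a b K by auto
        ultimately have "a = b" using nth_eq_iff_index_eq[OF d] by blast
        then show False using h by simp
      qed
    qed
  qed (use one a b in auto)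
qed

lemma rk_bound:
  assumes K: "K \<subseteq> {0..<length p}" and a: "a \<in> K"
  shows "rk p K a < card K"
proof -
  have fin: "finite K" using K finite_subset by blast
  have "{j\<in>K. p!j < p!a} \<subset> K" using a by auto
  then show ?thesis unfolding rk_def using fin psubset_card_mono by blast
qed

lemma std_restrict:
  assumes K: "K \<subseteq> {0..<length p}" and d: "distinct p"
  shows "\<exists>\<rho>. is_perm \<rho> \<and> length \<rho> = card K \<and> emb_on \<rho> {0..<card K} p K (enum K)"
proof -
  have fin: "finite K" using K finite_subset by blast
  define \<rho> where "\<rho> = map (rk p K) (sorted_list_of_set K)"
  have len: "length \<rho> = card K" unfolding \<rho>_def by (simp add: length_sorted_list_of_set)
  have nth: "\<rho> ! i = rk p K (enum K i)" if "i < card K" for i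
    unfolding \<rho>_def enum_def using that by (simp add: length_sorted_list_of_set)
  have injr: "inj_on (rk p K) K"
  proof (rule inj_onI)
    fix x y assume xy: "x \<in> K" "y \<in> K" "rk p K x = rk p K y"
    then have "\<not> p!x < p!y" "\<not> p!y < p!x" using rk_less[OF K d xy(1,2)] rk_less[OF K d xy(2,1)] by auto
    then have "p!x = p!y" by auto
    moreover have "x < length p" "y < length p" using xy K by auto
    ultimately show "x = y" using nth_eq_iff_index_eq[OF d] by blast
  qed
  have dist: "distinct \<rho>" unfolding \<rho>_def using injr fin
    by (simp add: distinct_map)
  have "set \<rho> = rk p K ` K" unfolding \<rho>_def using fin by simp
  moreover have "rk p K ` K \<subseteq> {0..<card K}" using rk_bound[OF K] by auto
  moreover have "card (rk p K ` K) = card K" using injr card_image by blast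
  ultimately have "set \<rho> = {0..<card K}" by (metis card_atLeastLessThan card_subset_eq finite_atLeastLessThan minus_nat.diff_0)
  then have perm: "is_perm \<rho>" unfolding is_perm_def using dist len by simp
  have "emb_on \<rho> {0..<card K} p K (enum K)"
    unfolding emb_on_def
  proof (intro conjI ballI impI)
    fix i assume "i \<in> {0..<card K}" then show "enum K i \<in> K" using enum_in fin by auto
  next
    fix i j assume "i \<in> {0..<card K}" "j \<in> {0..<card K}" "i < j" then show "enum K i < enum K j" using enum_mono fin by auto
  next
    fix i j assume ij: "i \<in> {0..<card K}" "j \<in> {0..<card K}"
    then have "enum K i \<in> K" "enum K j \<in> K" using enum_in fin by auto
    then show "\<rho> ! i < \<rho> ! j \<longleftrightarrow> p ! enum K i < p ! enum K j" using nth ij rk_less[OF K d] by auto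
  qed
  then show ?thesis using perm len by blast
qed

lemma smp_simple:
  assumes perm: "is_perm \<sigma>" and s: "smp ((!) \<sigma>) {0..<length \<sigma>}"
  shows "simple \<sigma>"
  unfolding simple_def
proof (intro conjI allI impI)
  show "is_perm \<sigma>" by fact
  fix S assume "is_interval \<sigma> S"
  then obtain i j a b where S: "S = {i..<j}" "j \<le> length \<sigma>" "(\<lambda>k. \<sigma> ! k) ` S = {a..<b}"
    unfolding is_interval_def by blast
  have d: "distinct \<sigma>" using perm unfolding is_perm_def by auto
  have "ivl ((!) \<sigma>) {0..<length \<sigma>} S"
    unfolding ivl_def
  proof (intro conjI ballI)
    show "S \<subseteq> {0..<length \<sigma>}" using S by auto
    fix q x y assume q: "q \<in> {0..<length \<sigma>} - S" and x: "x \<in> S" and y: "y \<in> S"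
    have pos: "\<not> (x < q \<and> q < y) \<and> \<not> (y < q \<and> q < x)" using q x y S by auto
    have "\<sigma> ! q \<notin> {a..<b}"
    proof
      assume "\<sigma> ! q \<in> {a..<b}"
      then obtain k where k: "k \<in> S" "\<sigma> ! q = \<sigma> ! k" using S(3) by (metis imageE)
      moreover have "q < length \<sigma>" "k < length \<sigma>" using q k S by auto
      ultimately have "q = k" using nth_eq_iff_index_eq[OF d] by blast
      then show False using k q by auto
    qed
    moreover have "\<sigma> ! x \<in> {a..<b}" "\<sigma> ! y \<in> {a..<b}" using S(3) x y by auto
    ultimately have "\<not> (\<sigma>!x < \<sigma>!q \<and> \<sigma>!q < \<sigma>!y) \<and> \<not> (\<sigma>!y < \<sigma>!q \<and> \<sigma>!q < \<sigma>!x)" by auto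
    then show "\<not> btw ((!) \<sigma>) x q y" using pos unfolding btw_def by auto
  qed
  then have "card S \<le> 1 \<or> S = {0..<length \<sigma>}" using s unfolding smp_def by blast
  then show "card S \<in> {0, 1, length \<sigma>}" by auto
qed

definition infl :: "nat list \<Rightarrow> nat list \<Rightarrow> (nat \<Rightarrow> nat) \<Rightarrow> bool" where
  "infl \<sigma> \<pi> blk \<longleftrightarrow> (\<forall>i<length \<pi>. blk i < length \<sigma>) \<and> (\<forall>c<length \<sigma>. \<exists>i<length \<pi>. blk i = c)
    \<and> (\<forall>i j. i \<le> j \<longrightarrow> j < length \<pi> \<longrightarrow> blk i \<le> blk j)
    \<and> (\<forall>i<length \<pi>. \<forall>j<length \<pi>. blk i \<noteq> blk j \<longrightarrow> (\<pi>!i < \<pi>!j \<longleftrightarrow> \<sigma>!(blk i) < \<sigma>!(blk j)))"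

definition blks :: "nat list \<Rightarrow> (nat \<Rightarrow> nat) \<Rightarrow> nat \<Rightarrow> nat set" where
  "blks \<pi> blk c = {i. i < length \<pi> \<and> blk i = c}"

lemma infl_std:
  assumes d: "distinct \<pi>"
  shows "\<exists>\<rho>. is_perm \<rho> \<and> length \<rho> = length \<pi> \<and> infl \<rho> \<pi> id"
proof -
  let ?n = "length \<pi>"
  obtain \<rho> where r: "is_perm \<rho>" "length \<rho> = card {0..<?n}" "emb_on \<rho> {0..<card {0..<?n}} \<pi> {0..<?n} (enum {0..<?n})"
    using std_restrict[of "{0..<?n}" \<pi>] d by auto
  have en: "enum {0..<?n} i = i" if "i < ?n" for i unfolding enum_def using that by simp
  have "infl \<rho> \<pi> id"
    unfolding infl_def
  proof (intro conjI allI impI)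
    fix i j assume "i < ?n" "j < ?n"
    then show "\<pi>!i < \<pi>!j \<longleftrightarrow> \<rho>!(id i) < \<rho>!(id j)" using r(3) en unfolding emb_on_def by auto
  qed (use r in auto)
  then show ?thesis using r by auto
qed

lemma ivl_contig:
  assumes J: "ivl v {0..<n} J" and ne: "J \<noteq> {}"
  shows "J = {Min J..Max J}"
proof -
  have fin: "finite J" using J unfolding ivl_def using finite_subset by blast
  have "c \<in> J" if "Min J \<le> c" "c \<le> Max J" for c
  proof (rule ccontr)
    assume c: "c \<notin> J"
    have mm: "Min J \<in> J" "Max J \<in> J" using fin ne by auto
    have "Max J < n" using J mm unfolding ivl_def by auto
    then have cn: "c \<in> {0..<n} - J" using that c by auto
    have "Min J \<noteq> c" "Max J \<noteq> c" using mm c by auto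
    then have lt: "Min J < c" "c < Max J" using that by auto
    have "\<not> btw v (Min J) c (Max J)" using J cn mm unfolding ivl_def by blast
    then show False using lt unfolding btw_def by simp
  qed
  moreover have "x \<in> J \<Longrightarrow> Min J \<le> x \<and> x \<le> Max J" for x using Min_le[OF fin] Max_ge[OF fin] by blast
  ultimately show ?thesis by (intro set_eqI) (meson atLeastAtMost_iff)
qed

lemma collapse:
  assumes inf: "infl \<sigma> \<pi> blk" and perm: "is_perm \<sigma>"
    and J: "ivl ((!) \<sigma>) {0..<length \<sigma>} J" and cJ: "2 \<le> card J" and Jne: "J \<noteq> {0..<length \<sigma>}"
  shows "\<exists>\<sigma>' blk'. is_perm \<sigma>' \<and> length \<sigma>' = length \<sigma> + 1 - card J \<and> infl \<sigma>' \<pi> blk'"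
proof -
  let ?n = "length \<sigma>"
  have d: "distinct \<sigma>" using perm unfolding is_perm_def by auto
  have JS: "J \<subseteq> {0..<?n}" using J unfolding ivl_def by auto
  have neJ: "J \<noteq> {}" using cJ by auto
  define a where "a = Min J"
  define b where "b = Max J"
  have Jab: "J = {a..b}" using ivl_contig[OF J neJ] a_def b_def by simp
  have ab: "a \<le> b" "b < ?n" using Jab JS neJ by auto
  have cardJ: "card J = b - a + 1" using Jab ab by simp
  define rep where "rep c = (if a \<le> c \<and> c \<le> b then a else c)" for c
  define K where "K = {0..<?n} - {a<..b}"
  have KS: "K \<subseteq> {0..<length \<sigma>}" unfolding K_def by auto
  have finK: "finite K" unfolding K_def by auto
  have cardK: "card K = ?n - (b - a)"
  proof -
    have "card K = card {0..<?n} - card {a<..b}" unfolding K_def using ab by (intro card_Diff_subset) auto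
    then show ?thesis by simp
  qed
  have repK: "rep c \<in> K" if "c < ?n" for c using that ab unfolding rep_def K_def by auto
  have repid: "rep c = c" if "c \<in> K" for c using that unfolding rep_def K_def by auto
  have repmono: "rep c \<le> rep c'" if "c \<le> c'" for c c' using that unfolding rep_def by auto
  have repval: "\<sigma>!c < \<sigma>!c' \<longleftrightarrow> \<sigma>!(rep c) < \<sigma>!(rep c')" if "c < ?n" "c' < ?n" "rep c \<noteq> rep c'" for c c'
  proof -
    have aJ: "a \<in> J" using Jab ab by auto
    have key: "\<sigma>!x < \<sigma>!y \<longleftrightarrow> \<sigma>!a < \<sigma>!y" if "x \<in> J" "y < ?n" "y \<notin> J" for x y
    proof -
      have "\<not> btw ((!) \<sigma>) a y x" using J that aJ unfolding ivl_def by auto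
      moreover have "\<sigma>!y \<noteq> \<sigma>!x" "\<sigma>!y \<noteq> \<sigma>!a" using nth_eq_iff_index_eq[OF d] that aJ JS by auto
      ultimately show ?thesis unfolding btw_def by auto
    qed
    have key2: "\<sigma>!y < \<sigma>!x \<longleftrightarrow> \<sigma>!y < \<sigma>!a" if "x \<in> J" "y < ?n" "y \<notin> J" for x y
    proof -
      have "\<not> btw ((!) \<sigma>) a y x" using J that aJ unfolding ivl_def by auto
      moreover have "\<sigma>!y \<noteq> \<sigma>!x" "\<sigma>!y \<noteq> \<sigma>!a" using nth_eq_iff_index_eq[OF d] that aJ JS by auto
      ultimately show ?thesis unfolding btw_def by auto
    qed
    show ?thesis
    proof (cases "c \<in> J")
      case True
      then have "c' \<notin> J" using that Jab unfolding rep_def by auto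
      then show ?thesis using key[OF True that(2)] True Jab unfolding rep_def by auto
    next
      case False
      show ?thesis
      proof (cases "c' \<in> J")
        case True
        then show ?thesis using key2[OF True that(1) False] False Jab unfolding rep_def by auto
      next
        case False
        then show ?thesis using \<open>c \<notin> J\<close> Jab unfolding rep_def by auto
      qed
    qed
  qed
  obtain \<rho> where r: "is_perm \<rho>" "length \<rho> = card K" "emb_on \<rho> {0..<card K} \<sigma> K (enum K)"
    using std_restrict[OF KS d] by blast
  define blk' where "blk' i = idx K (rep (blk i))" for i
  have infs: "\<forall>i<length \<pi>. blk i < ?n" "\<forall>c<?n. \<exists>i<length \<pi>. blk i = c"
    "\<forall>i j. i \<le> j \<longrightarrow> j < length \<pi> \<longrightarrow> blk i \<le> blk j"
    "\<forall>i<length \<pi>. \<forall>j<length \<pi>. blk i \<noteq> blk j \<longrightarrow> (\<pi>!i < \<pi>!j \<longleftrightarrow> \<sigma>!(blk i) < \<sigma>!(blk j))"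
    using inf unfolding infl_def by auto
  have rhoval: "\<rho>!(idx K x) < \<rho>!(idx K y) \<longleftrightarrow> \<sigma>!x < \<sigma>!y" if "x \<in> K" "y \<in> K" for x y
  proof -
    have "idx K x \<in> {0..<card K}" "idx K y \<in> {0..<card K}" using idx_less finK that by auto
    then show ?thesis using r(3) enum_idx[OF finK] that unfolding emb_on_def by metis
  qed
  have "infl \<rho> \<pi> blk'"
    unfolding infl_def
  proof (intro conjI allI impI)
    fix i assume "i < length \<pi>"
    then show "blk' i < length \<rho>" unfolding blk'_def using r(2) idx_less finK repK infs(1) by auto
  next
    fix c assume c: "c < length \<rho>"
    then have ec: "enum K c \<in> K" using enum_in finK r(2) by auto
    then have "enum K c < length \<sigma>" using KS by auto
    then obtain i where i: "i < length \<pi>" "blk i = enum K c" using infs(2) by blast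
    have "blk' i = c" unfolding blk'_def i(2) repid[OF ec] using idx_enum finK c r(2) by auto
    then show "\<exists>i<length \<pi>. blk' i = c" using i by blast
  next
    fix i j assume "i \<le> j" "j < length \<pi>"
    then show "blk' i \<le> blk' j" unfolding blk'_def using infs(3) repmono idx_mono finK by auto
  next
    fix i j assume ij: "i < length \<pi>" "j < length \<pi>" "blk' i \<noteq> blk' j"
    then have rr: "rep (blk i) \<noteq> rep (blk j)" unfolding blk'_def by auto
    then have "blk i \<noteq> blk j" by auto
    then have "\<pi>!i < \<pi>!j \<longleftrightarrow> \<sigma>!(blk i) < \<sigma>!(blk j)" using infs(4) ij by auto
    also have "\<dots> \<longleftrightarrow> \<sigma>!(rep (blk i)) < \<sigma>!(rep (blk j))" using repval infs(1) ij rr by auto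
    also have "\<dots> \<longleftrightarrow> \<rho>!(blk' i) < \<rho>!(blk' j)" unfolding blk'_def using rhoval repK infs(1) ij by auto
    finally show "\<pi>!i < \<pi>!j \<longleftrightarrow> \<rho>!(blk' i) < \<rho>!(blk' j)" .
  qed
  moreover have "length \<rho> = length \<sigma> + 1 - card J" using r(2) cardK cardJ ab by simp
  ultimately show ?thesis using r(1) by blast
qed

lemma dec_exists:
  assumes d: "distinct \<pi>" and n: "2 \<le> length \<pi>"
  shows "\<exists>\<sigma> blk. is_perm \<sigma> \<and> 2 \<le> length \<sigma> \<and> smp ((!) \<sigma>) {0..<length \<sigma>} \<and> infl \<sigma> \<pi> blk"
proof -
  define S where "S k \<longleftrightarrow> (\<exists>\<sigma> blk. is_perm \<sigma> \<and> length \<sigma> = k \<and> 2 \<le> k \<and> infl \<sigma> \<pi> blk)" for k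
  have "S (length \<pi>)" using infl_std[OF d] n unfolding S_def by blast
  then obtain k where k: "S k" and kmin: "\<And>k'. S k' \<Longrightarrow> k \<le> k'" using ex_has_least_nat[of S "length \<pi>" id] by auto
  then obtain \<sigma> blk where sb: "is_perm \<sigma>" "length \<sigma> = k" "2 \<le> k" "infl \<sigma> \<pi> blk" unfolding S_def by blast
  have "smp ((!) \<sigma>) {0..<length \<sigma>}"
    unfolding smp_def
  proof (intro allI impI)
    fix J assume J: "ivl ((!) \<sigma>) {0..<length \<sigma>} J"
    show "card J \<le> 1 \<or> J = {0..<length \<sigma>}"
    proof (rule ccontr)
      assume "\<not> (card J \<le> 1 \<or> J = {0..<length \<sigma>})"
      then have cJ: "2 \<le> card J" "J \<noteq> {0..<length \<sigma>}" by auto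
      have JS: "J \<subseteq> {0..<length \<sigma>}" using J unfolding ivl_def by auto
      then have "J \<subset> {0..<length \<sigma>}" using cJ(2) by auto
      then have "card J < card {0..<length \<sigma>}" by (intro psubset_card_mono) auto
      then have "card J < length \<sigma>" by simp
      then have "S (length \<sigma> + 1 - card J)"
        using collapse[OF sb(4) sb(1) J cJ] unfolding S_def by auto
      then have "k \<le> length \<sigma> + 1 - card J" using kmin by blast
      then show False using sb(2,3) cJ(1) by simp
    qed
  qed
  then show ?thesis using sb by blast
qed

lemma infl_parts:
  assumes "infl \<sigma> \<pi> blk"
  shows "\<And>i. i < length \<pi> \<Longrightarrow> blk i < length \<sigma>"
    and "\<And>c. c < length \<sigma> \<Longrightarrow> \<exists>i<length \<pi>. blk i = c"
    and "\<And>i j. i \<le> j \<Longrightarrow> j < length \<pi> \<Longrightarrow> blk i \<le> blk j"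
    and "\<And>i j. i < length \<pi> \<Longrightarrow> j < length \<pi> \<Longrightarrow> blk i \<noteq> blk j \<Longrightarrow> (\<pi>!i < \<pi>!j \<longleftrightarrow> \<sigma>!(blk i) < \<sigma>!(blk j))"
  using assms unfolding infl_def by auto

lemma infl_skel_contained:
  assumes inf: "infl \<sigma> \<pi> blk"
  shows "\<exists>r. emb_on \<sigma> {0..<length \<sigma>} \<pi> {0..<length \<pi>} r"
proof -
  note ip = infl_parts[OF inf]
  define r where "r c = (LEAST i. i < length \<pi> \<and> blk i = c)" for c
  have rr: "r c < length \<pi> \<and> blk (r c) = c" if "c < length \<sigma>" for c
    unfolding r_def using ip(2)[OF that] by (metis (mono_tags, lifting) LeastI)
  have "emb_on \<sigma> {0..<length \<sigma>} \<pi> {0..<length \<pi>} r"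
    unfolding emb_on_def
  proof (intro conjI ballI impI)
    fix c assume "c \<in> {0..<length \<sigma>}" then show "r c \<in> {0..<length \<pi>}" using rr by auto
  next
    fix c d assume cd: "c \<in> {0..<length \<sigma>}" "d \<in> {0..<length \<sigma>}" "c < d"
    show "r c < r d"
    proof (rule ccontr)
      assume "\<not> r c < r d"
      then have le: "r d \<le> r c" by simp
      have "c < length \<sigma>" using cd by auto
      then have "r c < length \<pi>" using rr by blast
      then have "blk (r d) \<le> blk (r c)" using ip(3)[OF le] by blast
      then show False using rr cd by auto
    qed
  next
    fix c d assume cd: "c \<in> {0..<length \<sigma>}" "d \<in> {0..<length \<sigma>}"
    show "\<sigma>!c < \<sigma>!d \<longleftrightarrow> \<pi>!(r c) < \<pi>!(r d)"
    proof (cases "c = d")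
      case False
      then show ?thesis using ip(4)[of "r c" "r d"] rr cd by auto
    qed simp
  qed
  then show ?thesis by blast
qed

lemma blks_sub: "blks \<pi> blk c \<subseteq> {0..<length \<pi>}"
  unfolding blks_def by auto

lemma blks_small:
  assumes inf: "infl \<sigma> \<pi> blk" and s2: "2 \<le> length \<sigma>" and c: "c < length \<sigma>"
  shows "length (nths \<pi> (blks \<pi> blk c)) < length \<pi>"
proof -
  note ip = infl_parts[OF inf]
  have "(if c = 0 then 1 else 0) < length \<sigma>" "(if c = 0 then 1 else 0) \<noteq> c" using s2 c by auto
  then obtain c' where c': "c' < length \<sigma>" "c' \<noteq> c" by blast
  obtain i where i: "i < length \<pi>" "blk i = c'" using ip(2)[OF c'(1)] by blast
  have "blks \<pi> blk c \<subset> {0..<length \<pi>}" using blks_sub i c' unfolding blks_def by auto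
  then have "card (blks \<pi> blk c) < card {0..<length \<pi>}" by (intro psubset_card_mono) auto
  then have "card (blks \<pi> blk c) < length \<pi>" by simp
  then show ?thesis using length_nths_sub[OF blks_sub] by simp
qed

lemma infl_mono:
  assumes inf: "infl \<sigma> \<pi> blk" and inf': "infl \<sigma> \<pi>' blk'"
    and ch: "\<forall>c<length \<sigma>. nths \<pi> (blks \<pi> blk c) \<preceq> nths \<pi>' (blks \<pi>' blk' c)"
  shows "\<pi> \<preceq> \<pi>'"
proof -
  note ip = infl_parts[OF inf] and ip' = infl_parts[OF inf']
  have "\<forall>c<length \<sigma>. \<exists>h. emb_on \<pi> (blks \<pi> blk c) \<pi>' (blks \<pi>' blk' c) h"
    using ch nths_contains_emb[OF blks_sub blks_sub] by blast
  then obtain H where H: "\<And>c. c < length \<sigma> \<Longrightarrow> emb_on \<pi> (blks \<pi> blk c) \<pi>' (blks \<pi>' blk' c) (H c)"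
    by metis
  define G where "G i = H (blk i) i" for i
  have Gin: "G i < length \<pi>' \<and> blk' (G i) = blk i" if "i < length \<pi>" for i
    using H[OF ip(1)[OF that]] that unfolding G_def emb_on_def blks_def by auto
  have same: "emb_on \<pi> (blks \<pi> blk (blk i)) \<pi>' (blks \<pi>' blk' (blk i)) (H (blk i))" if "i < length \<pi>" for i
    using H ip(1) that by blast
  have "emb_on \<pi> {0..<length \<pi>} \<pi>' {0..<length \<pi>'} G"
    unfolding emb_on_def
  proof (intro conjI ballI impI)
    fix i assume "i \<in> {0..<length \<pi>}" then show "G i \<in> {0..<length \<pi>'}" using Gin by auto
  next
    fix i j assume ij: "i \<in> {0..<length \<pi>}" "j \<in> {0..<length \<pi>}" "i < j"
    show "G i < G j"
    proof (cases "blk i = blk j")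
      case True
      have "i \<in> blks \<pi> blk (blk i)" "j \<in> blks \<pi> blk (blk i)" using ij True unfolding blks_def by auto
      then show ?thesis using same[of i] ij True unfolding emb_on_def G_def by auto
    next
      case False
      then have "blk i < blk j" using ip(3)[of i j] ij by auto
      then have "blk' (G i) < blk' (G j)" using Gin ij by auto
      then show ?thesis using ip'(3)[of "G j" "G i"] Gin ij by (metis atLeastLessThan_iff leD linorder_le_less_linear)
    qed
  next
    fix i j assume ij: "i \<in> {0..<length \<pi>}" "j \<in> {0..<length \<pi>}"
    show "\<pi>!i < \<pi>!j \<longleftrightarrow> \<pi>'!(G i) < \<pi>'!(G j)"
    proof (cases "blk i = blk j")
      case True
      have "i \<in> blks \<pi> blk (blk i)" "j \<in> blks \<pi> blk (blk i)" using ij True unfolding blks_def by auto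
      then show ?thesis using same[of i] ij True unfolding emb_on_def G_def by auto
    next
      case False
      then have "\<pi>!i < \<pi>!j \<longleftrightarrow> \<sigma>!(blk i) < \<sigma>!(blk j)" using ip(4) ij by auto
      also have "\<dots> \<longleftrightarrow> \<pi>'!(G i) < \<pi>'!(G j)" using ip'(4)[of "G i" "G j"] Gin ij False by auto
      finally show ?thesis .
    qed
  qed
  then show ?thesis unfolding contains_emb by blast
qed

locale wqo_setup =
  fixes le :: "'a \<Rightarrow> 'a \<Rightarrow> bool" and A :: "'a set" and sz :: "'a \<Rightarrow> nat"
    and lab :: "'a \<Rightarrow> 'l" and L :: "'l set" and ar :: "'l \<Rightarrow> nat" and ch :: "'a \<Rightarrow> nat \<Rightarrow> 'a"
  assumes trans: "\<And>x y z. x \<in> A \<Longrightarrow> y \<in> A \<Longrightarrow> z \<in> A \<Longrightarrow> le x y \<Longrightarrow> le y z \<Longrightarrow> le x z"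
    and finL: "finite L" and labL: "\<And>x. x \<in> A \<Longrightarrow> lab x \<in> L"
    and chA: "\<And>x c. x \<in> A \<Longrightarrow> c < ar (lab x) \<Longrightarrow> ch x c \<in> A"
    and chsz: "\<And>x c. x \<in> A \<Longrightarrow> c < ar (lab x) \<Longrightarrow> sz (ch x c) < sz x"
    and chle: "\<And>x c. x \<in> A \<Longrightarrow> c < ar (lab x) \<Longrightarrow> le (ch x c) x"
    and mono: "\<And>x y. x \<in> A \<Longrightarrow> y \<in> A \<Longrightarrow> lab x = lab y \<Longrightarrow> (\<forall>c<ar (lab x). le (ch x c) (ch y c)) \<Longrightarrow> le x y"
begin

definition good :: "(nat \<Rightarrow> 'a) \<Rightarrow> bool" where
  "good f \<longleftrightarrow> (\<exists>i j. i < j \<and> le (f i) (f j))"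

definition badA :: "(nat \<Rightarrow> 'a) \<Rightarrow> bool" where
  "badA f \<longleftrightarrow> (\<forall>i. f i \<in> A) \<and> \<not> good f"

definition nxt :: "'a list \<Rightarrow> 'a set" where
  "nxt l = {g (length l) | g. badA g \<and> (\<forall>i<length l. g i = l ! i)}"

definition chooz :: "'a list \<Rightarrow> 'a" where
  "chooz l = (SOME x. x \<in> nxt l \<and> (\<forall>y\<in>nxt l. sz x \<le> sz y))"

fun pre :: "nat \<Rightarrow> 'a list" where
  "pre 0 = []"
| "pre (Suc n) = pre n @ [chooz (pre n)]"

lemma pre_len: "length (pre n) = n"
  by (induction n) auto

lemma chooz_prop: "nxt l \<noteq> {} \<Longrightarrow> chooz l \<in> nxt l \<and> (\<forall>y\<in>nxt l. sz (chooz l) \<le> sz y)"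
proof -
  assume ne: "nxt l \<noteq> {}"
  then obtain x0 where "x0 \<in> nxt l" by blast
  then obtain x where "x \<in> nxt l" "\<forall>y. y \<in> nxt l \<longrightarrow> sz x \<le> sz y"
    using ex_has_least_nat[of "\<lambda>x. x \<in> nxt l" x0 sz] by blast
  then have "\<exists>x. x \<in> nxt l \<and> (\<forall>y\<in>nxt l. sz x \<le> sz y)" by blast
  then show ?thesis unfolding chooz_def by (rule someI_ex)
qed

lemma pre_ne:
  assumes ex: "\<exists>g. badA g"
  shows "nxt (pre n) \<noteq> {}"
proof (induction n)
  case 0
  then show ?case using ex unfolding nxt_def by auto
next
  case (Suc n)
  from chooz_prop[OF Suc] have "chooz (pre n) \<in> nxt (pre n)" by blast
  then obtain g where g: "badA g" "\<forall>i<n. g i = pre n ! i" "g n = chooz (pre n)"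
    unfolding nxt_def using pre_len by auto
  have "\<forall>i<Suc n. g i = pre (Suc n) ! i"
  proof (intro allI impI)
    fix i assume "i < Suc n"
    then show "g i = pre (Suc n) ! i" using g pre_len[of n] by (cases "i = n") (auto simp: nth_append)
  qed
  then have "badA g \<and> (\<forall>i<length (pre (Suc n)). g i = pre (Suc n) ! i)" using g(1) pre_len by simp
  then have "g (length (pre (Suc n))) \<in> nxt (pre (Suc n))" unfolding nxt_def by blast
  then show ?case by blast
qed

definition mbs :: "nat \<Rightarrow> 'a" where
  "mbs n = chooz (pre n)"

lemma pre_nth: "i < n \<Longrightarrow> pre n ! i = mbs i"
proof (induction n)
  case 0 then show ?case by simp
next
  case (Suc n)
  then show ?case using pre_len[of n] unfolding mbs_def by (cases "i = n") (auto simp: nth_append)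
qed

lemma mbs_props:
  assumes ex: "\<exists>g. badA g"
  shows "badA mbs"
    and "\<And>g n. badA g \<Longrightarrow> (\<forall>i<n. g i = mbs i) \<Longrightarrow> sz (mbs n) \<le> sz (g n)"
proof -
  have agree: "\<exists>g. badA g \<and> (\<forall>i\<le>j. g i = mbs i)" for j
  proof -
    from pre_ne[OF ex, of "Suc j"] obtain g where g: "badA g" "\<forall>i<Suc j. g i = pre (Suc j) ! i"
      unfolding nxt_def using pre_len by auto
    have "\<forall>i\<le>j. g i = mbs i"
    proof (intro allI impI)
      fix i assume "i \<le> j" then have ij: "i < Suc j" by simp
      show "g i = mbs i" using g(2)[rule_format, OF ij] pre_nth[OF ij] by (simp del: pre.simps)
    qed
    then show ?thesis using g(1) by blast
  qed
  show "badA mbs"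
    unfolding badA_def good_def
  proof (intro conjI allI notI)
    fix i
    obtain g where "badA g" "\<forall>k\<le>i. g k = mbs k" using agree by blast
    then show "mbs i \<in> A" unfolding badA_def by (metis order_refl)
  next
    assume "\<exists>i j. i < j \<and> le (mbs i) (mbs j)"
    then obtain i j where ij: "i < j" "le (mbs i) (mbs j)" by blast
    obtain g where g: "badA g" "\<forall>k\<le>j. g k = mbs k" using agree by blast
    then have "le (g i) (g j)" using ij by auto
    then show False using g(1) ij(1) unfolding badA_def good_def by blast
  qed
  fix g n assume g: "badA g" "\<forall>i<n. g i = mbs i"
  have "g n \<in> nxt (pre n)" unfolding nxt_def using g pre_len pre_nth by auto
  then show "sz (mbs n) \<le> sz (g n)" using chooz_prop[OF pre_ne[OF ex]] unfolding mbs_def by blast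
qed

lemma incr_subseq:
  fixes s :: "nat \<Rightarrow> 'a"
  assumes HA: "H \<subseteq> A" and Hg: "\<forall>h. (\<forall>k. h k \<in> H) \<longrightarrow> good h" and s: "\<forall>k. s k \<in> H"
  shows "\<exists>\<phi>::nat\<Rightarrow>nat. strict_mono \<phi> \<and> (\<forall>i j. i < j \<longrightarrow> le (s (\<phi> i)) (s (\<phi> j)))"
proof -
  define T where "T = {i. \<forall>j>i. \<not> le (s i) (s j)}"
  have "finite T"
  proof (rule ccontr)
    assume "infinite T"
    then obtain r :: "nat \<Rightarrow> nat" where r: "strict_mono r" "\<forall>n. r n \<in> T" using infinite_enumerate by blast
    have "good (s \<circ> r)" using Hg s by auto
    then obtain i j where "i < j" "le (s (r i)) (s (r j))" unfolding good_def by auto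
    moreover have "r i < r j" using r(1) \<open>i < j\<close> by (simp add: strict_monoD)
    ultimately show False using r(2) unfolding T_def by blast
  qed
  then obtain N where N: "\<forall>i\<ge>N. i \<notin> T" by (metis finite_nat_set_iff_bounded_le not_less_eq_eq le_trans)
  have step: "\<exists>j>i. le (s i) (s j)" if "i \<ge> N" for i using N that unfolding T_def by auto
  define nx where "nx i = (SOME j. j > i \<and> le (s i) (s j))" for i
  have nxp: "nx i > i \<and> le (s i) (s (nx i))" if "i \<ge> N" for i
    unfolding nx_def using someI_ex[OF step[OF that]] .
  define \<phi> where "\<phi> k = (nx ^^ k) N" for k
  have phiN: "\<phi> k \<ge> N" for k
  proof (induction k)
    case 0 then show ?case unfolding \<phi>_def by simp
  next
    case (Suc k) then show ?case using nxp[of "\<phi> k"] unfolding \<phi>_def by auto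
  qed
  have phiS: "\<phi> (Suc k) = nx (\<phi> k)" for k unfolding \<phi>_def by simp
  have sm: "strict_mono \<phi>"
    by (rule strict_mono_Suc_iff[THEN iffD2]) (use nxp phiN phiS in auto)
  have chain: "le (s (\<phi> i)) (s (\<phi> j))" if "i < j" for i j
    using that
  proof (induction j)
    case 0 then show ?case by simp
  next
    case (Suc j)
    have l1: "le (s (\<phi> j)) (s (\<phi> (Suc j)))" using nxp[OF phiN[of j]] phiS by simp
    show ?case
    proof (cases "i = j")
      case True then show ?thesis using l1 by simp
    next
      case False
      then have l0: "le (s (\<phi> i)) (s (\<phi> j))" using Suc by auto
      have "s (\<phi> i) \<in> A" "s (\<phi> j) \<in> A" "s (\<phi> (Suc j)) \<in> A" using s HA by auto
      then show ?thesis using trans l0 l1 by blast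
    qed
  qed
  have "\<forall>i j. i < j \<longrightarrow> le (s (\<phi> i)) (s (\<phi> j))" using chain by blast
  then show ?thesis using sm by (intro exI[of _ \<phi>] conjI)
qed

lemma prod_subseq:
  fixes S :: "nat \<Rightarrow> nat \<Rightarrow> 'a"
  assumes HA: "H \<subseteq> A" and Hg: "\<forall>h. (\<forall>k. h k \<in> H) \<longrightarrow> good h"
  shows "(\<forall>c<r. \<forall>k. S c k \<in> H) \<Longrightarrow> \<exists>\<phi>::nat\<Rightarrow>nat. strict_mono \<phi> \<and> (\<forall>c<r. \<forall>i j. i < j \<longrightarrow> le (S c (\<phi> i)) (S c (\<phi> j)))"
proof (induction r)
  case 0
  have "strict_mono (id :: nat \<Rightarrow> nat)" by (simp add: strict_mono_def)
  then show ?case by blast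
next
  case (Suc r)
  have "\<forall>c<r. \<forall>k. S c k \<in> H" using Suc.prems by auto
  then obtain \<phi> :: "nat \<Rightarrow> nat" where phi: "strict_mono \<phi>" "\<forall>c<r. \<forall>i j. i < j \<longrightarrow> le (S c (\<phi> i)) (S c (\<phi> j))" using Suc.IH by blast
  have "\<forall>k. S r (\<phi> k) \<in> H" using Suc.prems by auto
  from incr_subseq[OF HA Hg this] obtain \<psi> :: "nat \<Rightarrow> nat" where psi: "strict_mono \<psi>" "\<forall>i j. i < j \<longrightarrow> le (S r (\<phi> (\<psi> i))) (S r (\<phi> (\<psi> j)))"
    by blast
  have "strict_mono (\<phi> \<circ> \<psi>)" using phi(1) psi(1) by (simp add: strict_mono_def)
  moreover have "\<forall>c<Suc r. \<forall>i j. i < j \<longrightarrow> le (S c ((\<phi> \<circ> \<psi>) i)) (S c ((\<phi> \<circ> \<psi>) j))"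
  proof (intro allI impI)
    fix c :: nat and i j :: nat assume c: "c < Suc r" and ij: "i < j"
    show "le (S c ((\<phi> \<circ> \<psi>) i)) (S c ((\<phi> \<circ> \<psi>) j))"
    proof (cases "c = r")
      case True then show ?thesis using psi ij by simp
    next
      case False
      then have "c < r" using c by simp
      moreover have "\<psi> i < \<psi> j" using psi(1) ij by (simp add: strict_monoD)
      ultimately show ?thesis using phi(2) by simp
    qed
  qed
  ultimately show ?case by blast
qed

theorem all_good: "\<forall>i. f i \<in> A \<Longrightarrow> good f"
proof (rule ccontr)
  assume fA: "\<forall>i. f i \<in> A" and ng: "\<not> good f"
  then have ex: "\<exists>g. badA g" unfolding badA_def by blast
  note mb = mbs_props[OF ex]
  have mA: "\<And>i. mbs i \<in> A" and mbad: "\<not> good mbs" using mb(1) unfolding badA_def by auto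
  define H where "H = {ch (mbs i) c | i c. c < ar (lab (mbs i))}"
  have HA: "H \<subseteq> A" unfolding H_def using chA mA by blast
  have Hg: "\<forall>h. (\<forall>k. h k \<in> H) \<longrightarrow> good h"
  proof (intro allI impI; rule ccontr)
    fix h assume hH: "\<forall>k. h k \<in> H" and hb: "\<not> good h"
    have "\<forall>k. \<exists>i c. c < ar (lab (mbs i)) \<and> h k = ch (mbs i) c" using hH unfolding H_def by blast
    then obtain ix cc where ixc: "\<And>k. cc k < ar (lab (mbs (ix k))) \<and> h k = ch (mbs (ix k)) (cc k)" by metis
    define i0 where "i0 = (LEAST i. \<exists>k. ix k = i)"
    have "\<exists>k. ix k = i0" unfolding i0_def by (rule LeastI_ex) blast
    then obtain k0 where k0: "ix k0 = i0" by blast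
    have i0min: "i0 \<le> ix k" for k unfolding i0_def by (rule Least_le) blast
    define g where "g i = (if i < i0 then mbs i else h (k0 + (i - i0)))" for i
    have gA: "g i \<in> A" for i unfolding g_def using mA hH HA by auto
    have hle: "le (h k) (mbs (ix k))" for k using chle[OF mA] ixc by metis
    have "\<not> good g"
    proof
      assume "good g"
      then obtain i j where ij: "i < j" "le (g i) (g j)" unfolding good_def by blast
      show False
      proof (cases "j < i0")
        case True
        then have "le (mbs i) (mbs j)" using ij unfolding g_def by auto
        then show False using mbad ij(1) unfolding good_def by blast
      next
        case jF: False
        show False
        proof (cases "i < i0")
          case True
          then have l1: "le (mbs i) (h (k0 + (j - i0)))" using ij jF unfolding g_def by auto
          let ?k = "k0 + (j - i0)"
          have "le (mbs i) (mbs (ix ?k))" using trans[OF mA _ mA l1 hle] hH HA by blast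
          moreover have "i < ix ?k" using True i0min[of ?k] by simp
          ultimately show False using mbad unfolding good_def by blast
        next
          case False
          then have "le (h (k0 + (i - i0))) (h (k0 + (j - i0)))" using ij jF unfolding g_def by auto
          moreover have "k0 + (i - i0) < k0 + (j - i0)" using ij False by simp
          ultimately show False using hb unfolding good_def by blast
        qed
      qed
    qed
    then have "badA g" using gA unfolding badA_def by blast
    moreover have "\<forall>i<i0. g i = mbs i" unfolding g_def by simp
    ultimately have "sz (mbs i0) \<le> sz (g i0)" using mb(2) by blast
    moreover have "g i0 = h k0" unfolding g_def by simp
    moreover have "sz (h k0) < sz (mbs i0)" using ixc[of k0] k0 chsz[OF mA] by metis
    ultimately show False by simp
  qed
  have "finite ((\<lambda>i. lab (mbs i)) ` UNIV)" using labL mA finL by (metis finite_subset image_subset_iff)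
  then obtain a0 where "infinite {a. lab (mbs a) = lab (mbs a0)}"
    using pigeonhole_infinite[of "UNIV :: nat set" "\<lambda>i. lab (mbs i)"] by auto
  then obtain r :: "nat \<Rightarrow> nat" where r: "strict_mono r" "\<forall>n. lab (mbs (r n)) = lab (mbs a0)"
    using infinite_enumerate by blast
  define l where "l = lab (mbs a0)"
  define S where "S c k = ch (mbs (r k)) c" for c k
  have "\<forall>c<ar l. \<forall>k. S c k \<in> H"
  proof (intro allI impI)
    fix c k assume "c < ar l"
    then have "c < ar (lab (mbs (r k)))" using r(2) l_def by simp
    then show "S c k \<in> H" unfolding S_def H_def by blast
  qed
  then obtain \<phi> :: "nat \<Rightarrow> nat" where phi: "strict_mono \<phi>" "\<forall>c<ar l. \<forall>i j. i < j \<longrightarrow> le (S c (\<phi> i)) (S c (\<phi> j))"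
    using prod_subseq[OF HA Hg] by blast
  let ?a = "r (\<phi> 0)" and ?b = "r (\<phi> 1)"
  have "le (mbs ?a) (mbs ?b)"
    by (rule mono[OF mA mA]) (use r(2) phi(2) l_def S_def in auto)
  moreover have "?a < ?b" using r(1) phi(1) by (simp add: strict_monoD)
  ultimately show False using mbad unfolding good_def by blast
qed

end

definition Dm :: "nat \<Rightarrow> nat list set" where
  "Dm m = {\<pi>. distinct \<pi> \<and> (\<forall>T. T \<subseteq> {0..<length \<pi>} \<and> smp ((!) \<pi>) T \<longrightarrow> card T \<le> m)}"

definition dec :: "nat list \<Rightarrow> nat list \<times> (nat \<Rightarrow> nat)" where
  "dec \<pi> = (SOME p. is_perm (fst p) \<and> 2 \<le> length (fst p) \<and> smp ((!) (fst p)) {0..<length (fst p)} \<and> infl (fst p) \<pi> (snd p))"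

definition labf :: "nat list \<Rightarrow> nat list" where
  "labf \<pi> = (if 2 \<le> length \<pi> then fst (dec \<pi>) else replicate (length \<pi>) 0)"

definition arf :: "nat list \<Rightarrow> nat" where
  "arf l = (if 2 \<le> length l then length l else 0)"

definition chf :: "nat list \<Rightarrow> nat \<Rightarrow> nat list" where
  "chf \<pi> c = nths \<pi> (blks \<pi> (snd (dec \<pi>)) c)"

lemma dec_prop:
  assumes "distinct \<pi>" "2 \<le> length \<pi>"
  shows "is_perm (fst (dec \<pi>)) \<and> 2 \<le> length (fst (dec \<pi>)) \<and> smp ((!) (fst (dec \<pi>))) {0..<length (fst (dec \<pi>))}
     \<and> infl (fst (dec \<pi>)) \<pi> (snd (dec \<pi>))"
proof -
  obtain \<sigma> blk where "is_perm \<sigma> \<and> 2 \<le> length \<sigma> \<and> smp ((!) \<sigma>) {0..<length \<sigma>} \<and> infl \<sigma> \<pi> blk"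
    using dec_exists[OF assms] by blast
  then have "\<exists>p. is_perm (fst p) \<and> 2 \<le> length (fst p) \<and> smp ((!) (fst p)) {0..<length (fst p)} \<and> infl (fst p) \<pi> (snd p)"
    by (intro exI[of _ "(\<sigma>, blk)"]) simp
  then show ?thesis unfolding dec_def by (rule someI_ex)
qed

lemma smp_card_bound:
  assumes emb: "emb_on \<sigma> {0..<length \<sigma>} \<pi> {0..<length \<pi>} h" and s: "smp ((!) \<sigma>) {0..<length \<sigma>}"
  shows "smp ((!) \<pi>) (h ` {0..<length \<sigma>}) \<and> h ` {0..<length \<sigma>} \<subseteq> {0..<length \<pi>} \<and> card (h ` {0..<length \<sigma>}) = length \<sigma>"
proof -
  have "smp ((!) \<pi>) (h ` {0..<length \<sigma>})" using smp_emb[OF emb order_refl] s by simp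
  moreover have "h ` {0..<length \<sigma>} \<subseteq> {0..<length \<pi>}" using emb unfolding emb_on_def by auto
  moreover have "card (h ` {0..<length \<sigma>}) = length \<sigma>" using emb_inj[OF emb] by (simp add: card_image)
  ultimately show ?thesis by blast
qed

lemma D_down:
  assumes "\<pi> \<in> Dm m" "\<rho> \<preceq> \<pi>" "distinct \<rho>"
  shows "\<rho> \<in> Dm m"
proof -
  obtain h where h: "emb_on \<rho> {0..<length \<rho>} \<pi> {0..<length \<pi>} h" using assms(2) unfolding contains_emb by blast
  have "card T \<le> m" if T: "T \<subseteq> {0..<length \<rho>}" "smp ((!) \<rho>) T" for T
  proof -
    have "smp ((!) \<pi>) (h ` T)" using smp_emb[OF h T(1)] T(2) by simp
    moreover have "h ` T \<subseteq> {0..<length \<pi>}" using h T(1) unfolding emb_on_def by auto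
    ultimately have "card (h ` T) \<le> m" using assms(1) unfolding Dm_def by blast
    moreover have "card (h ` T) = card T" using emb_inj[OF h] T(1) by (metis card_image inj_on_subset)
    ultimately show ?thesis by simp
  qed
  then show ?thesis using assms(3) unfolding Dm_def by blast
qed

lemma dec_in_D:
  assumes "\<pi> \<in> Dm m" "2 \<le> length \<pi>"
  shows "length (fst (dec \<pi>)) \<le> m"
proof -
  have d: "distinct \<pi>" using assms unfolding Dm_def by auto
  note dp = dec_prop[OF d assms(2)]
  obtain r where r: "emb_on (fst (dec \<pi>)) {0..<length (fst (dec \<pi>))} \<pi> {0..<length \<pi>} r"
    using infl_skel_contained dp by blast
  from smp_card_bound[OF r] dp have "smp ((!) \<pi>) (r ` {0..<length (fst (dec \<pi>))})"
    "r ` {0..<length (fst (dec \<pi>))} \<subseteq> {0..<length \<pi>}" "card (r ` {0..<length (fst (dec \<pi>))}) = length (fst (dec \<pi>))"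
    by auto
  then show ?thesis using assms(1) unfolding Dm_def by (metis (no_types, lifting) mem_Collect_eq)
qed

lemma D_wqo:
  fixes f :: "nat \<Rightarrow> nat list"
  assumes fD: "\<forall>i. f i \<in> Dm m"
  shows "\<exists>i j. i < j \<and> f i \<preceq> f j"
proof -
  define L where "L = {l :: nat list. set l \<subseteq> {0..<m+2} \<and> length l \<le> m + 2}"
  interpret W: wqo_setup "(\<preceq>)" "Dm m" length labf L arf chf
  proof
    show "\<And>x y z. x \<preceq> y \<Longrightarrow> y \<preceq> z \<Longrightarrow> x \<preceq> z" by (rule contains_trans)
    show "finite L" unfolding L_def by (rule finite_lists_length_le) simp
  next
    fix x assume x: "x \<in> Dm m"
    show "labf x \<in> L"
    proof (cases "2 \<le> length x")
      case True
      have d: "distinct x" using x unfolding Dm_def by auto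
      have "is_perm (fst (dec x))" using dec_prop[OF d True] by blast
      moreover have "length (fst (dec x)) \<le> m" using dec_in_D[OF x True] .
      ultimately show ?thesis unfolding labf_def L_def is_perm_def using True by auto
    next
      case False
      then show ?thesis unfolding labf_def L_def by auto
    qed
  next
    fix x c assume x: "x \<in> Dm m" and c: "c < arf (labf x)"
    have d: "distinct x" using x unfolding Dm_def by auto
    have x2: "2 \<le> length x"
    proof (rule ccontr)
      assume "\<not> 2 \<le> length x"
      then show False using c unfolding labf_def arf_def by auto
    qed
    note dp = dec_prop[OF d x2]
    have cl: "c < length (fst (dec x))" using c x2 unfolding labf_def arf_def by (auto split: if_splits)
    show "chf x c \<in> Dm m" unfolding chf_def
      by (rule D_down[OF x contains_nths[OF blks_sub]]) (use d in simp)
    show "length (chf x c) < length x" unfolding chf_def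
      using blks_small[of "fst (dec x)" x "snd (dec x)" c] dp cl by blast
    show "chf x c \<preceq> x" unfolding chf_def by (rule contains_nths[OF blks_sub])
  next
    fix x y assume x: "x \<in> Dm m" and y: "y \<in> Dm m" and lab: "labf x = labf y"
      and ch: "\<forall>c<arf (labf x). chf x c \<preceq> chf y c"
    have dx: "distinct x" and dy: "distinct y" using x y unfolding Dm_def by auto
    show "x \<preceq> y"
    proof (cases "2 \<le> length x")
      case True
      note dpx = dec_prop[OF dx True]
      have y2: "2 \<le> length y"
      proof (rule ccontr)
        assume "\<not> 2 \<le> length y"
        then have "length (labf y) < 2" unfolding labf_def by auto
        moreover have "length (labf x) \<ge> 2" using dpx True unfolding labf_def by auto
        ultimately show False using lab by simp
      qed
      note dpy = dec_prop[OF dy y2]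
      have same: "fst (dec x) = fst (dec y)" using lab True y2 unfolding labf_def by simp
      have "\<forall>c<length (fst (dec x)). nths x (blks x (snd (dec x)) c) \<preceq> nths y (blks y (snd (dec y)) c)"
        using ch dpx True unfolding chf_def arf_def labf_def by auto
      then show ?thesis using infl_mono[of "fst (dec x)" x "snd (dec x)" y "snd (dec y)"] dpx dpy same by auto
    next
      case False
      then have "length (labf x) = length x" unfolding labf_def by simp
      have y2: "\<not> 2 \<le> length y"
      proof
        assume y2: "2 \<le> length y"
        have "2 \<le> length (labf y)" using dec_prop[OF dy y2] y2 unfolding labf_def by auto
        moreover have "length (labf x) < 2" using False unfolding labf_def by simp
        ultimately show False using lab by simp
      qed
      then have "length x = length y" using lab False unfolding labf_def by (metis length_replicate)
      moreover have ij: "\<And>i j. i < length y \<Longrightarrow> j < length y \<Longrightarrow> i = j" using y2 by auto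
      moreover have "emb_on x {0..<length x} y {0..<length y} id"
        unfolding emb_on_def
      proof (intro conjI ballI impI)
        fix i j assume "i \<in> {0..<length x}" "j \<in> {0..<length x}"
        then have "i = j" using ij calculation(1) by auto
        then show "x ! i < x ! j \<longleftrightarrow> y ! id i < y ! id j" by simp
      qed (use calculation(1) in auto)
      ultimately show ?thesis unfolding contains_emb by auto
    qed
  qed
  from W.all_good[OF fD] show ?thesis unfolding W.good_def by blast
qed

lemma perm_distinct: "is_perm p \<Longrightarrow> distinct p"
  unfolding is_perm_def by simp

lemma restrict_in_class:
  assumes pc: "perm_class C" and \<pi>: "\<pi> \<in> C" and T: "T \<subseteq> {0..<length \<pi>}" and s: "smp ((!) \<pi>) T"
  shows "\<exists>\<rho>. is_perm \<rho> \<and> simple \<rho> \<and> length \<rho> = card T \<and> \<rho> \<preceq> \<pi>"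
proof -
  have perm: "is_perm \<pi>" using pc \<pi> unfolding perm_class_def by blast
  obtain \<rho> where r: "is_perm \<rho>" "length \<rho> = card T" "emb_on \<rho> {0..<card T} \<pi> T (enum T)"
    using std_restrict[OF T perm_distinct[OF perm]] by blast
  have fin: "finite T" using T finite_subset by blast
  have "smp ((!) \<rho>) {0..<card T}" using smp_emb[OF r(3) order_refl] enum_image[OF fin] s by simp
  then have "simple \<rho>" using smp_simple r by simp
  moreover have "\<rho> \<preceq> \<pi>" unfolding contains_emb using emb_sub[OF r(3) _ T] r(2) by auto
  ultimately show ?thesis using r by blast
qed

theorem mainTheorem8:
  assumes "perm_class C"
    and "finite {\<pi>\<in>C. simple \<pi>}"
  shows "finite (basis C)"
proof -
  define SC where "SC = {\<pi>\<in>C. simple \<pi>}"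
  define m where "m = Max (insert 0 (length ` SC))"
  have mb: "length \<sigma> \<le> m" if "\<sigma> \<in> SC" for \<sigma>
    unfolding m_def using assms(2) that SC_def by (intro Max_ge) auto
  have pc: "\<And>\<pi>. \<pi> \<in> C \<Longrightarrow> is_perm \<pi>" "\<And>\<pi> \<sigma>. \<pi> \<in> C \<Longrightarrow> is_perm \<sigma> \<Longrightarrow> \<sigma> \<preceq> \<pi> \<Longrightarrow> \<sigma> \<in> C"
    using assms(1) unfolding perm_class_def by blast+
  have bnd: "card T \<le> m" if b: "\<beta> \<in> basis C" and T: "T \<subseteq> {0..<length \<beta>}" "T \<noteq> {0..<length \<beta>}"
    and s: "smp ((!) \<beta>) T" for \<beta> T
  proof -
    have bp: "is_perm \<beta>" using b unfolding basis_def by blast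
    obtain \<rho> where r: "is_perm \<rho>" "length \<rho> = card T" "emb_on \<rho> {0..<card T} \<beta> T (enum T)"
      using std_restrict[OF T(1) perm_distinct[OF bp]] by blast
    have fin: "finite T" using T finite_subset by blast
    have "smp ((!) \<rho>) {0..<card T}" using smp_emb[OF r(3) order_refl] enum_image[OF fin] s by simp
    then have sr: "simple \<rho>" using smp_simple r by simp
    have rb: "\<rho> \<preceq> \<beta>" unfolding contains_emb using emb_sub[OF r(3) _ T(1)] r(2) by auto
    have "card T < card {0..<length \<beta>}" using T by (intro psubset_card_mono) auto
    then have "length \<rho> \<noteq> length \<beta>" using r(2) by simp
    then have "\<rho> \<noteq> \<beta>" by auto
    then have "\<rho> \<in> C" using b r(1) rb unfolding basis_def by blast
    then have "\<rho> \<in> SC" using sr SC_def by blast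
    then show ?thesis using mb r(2) by fastforce
  qed
  define N where "N = max 4 (m + 2)"
  define B1 where "B1 = {\<beta> \<in> basis C. smp ((!) \<beta>) {0..<length \<beta>}}"
  define B2 where "B2 = {\<beta> \<in> basis C. \<not> smp ((!) \<beta>) {0..<length \<beta>}}"
  have "B1 \<subseteq> {xs. set xs \<subseteq> {0..<N} \<and> length xs \<le> N}"
  proof
    fix \<beta> assume \<beta>: "\<beta> \<in> B1"
    then have b: "\<beta> \<in> basis C" "smp ((!) \<beta>) {0..<length \<beta>}" unfolding B1_def by auto
    have bp: "is_perm \<beta>" using b unfolding basis_def by blast
    have inj: "inj_on ((!) \<beta>) {0..<length \<beta>}"
      using perm_distinct[OF bp] by (simp add: inj_on_def nth_eq_iff_index_eq)
    have "length \<beta> \<le> N" unfolding N_def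
      by (rule weak_ST[OF inj b(2)]) (use bnd b(1) in blast)
    moreover have "set \<beta> = {0..<length \<beta>}" using bp unfolding is_perm_def by simp
    ultimately show "\<beta> \<in> {xs. set xs \<subseteq> {0..<N} \<and> length xs \<le> N}" by auto
  qed
  then have f1: "finite B1" by (rule finite_subset) (rule finite_lists_length_le, simp)
  have B2D: "B2 \<subseteq> Dm m"
  proof
    fix \<beta> assume "\<beta> \<in> B2"
    then have b: "\<beta> \<in> basis C" "\<not> smp ((!) \<beta>) {0..<length \<beta>}" unfolding B2_def by auto
    have bp: "is_perm \<beta>" using b unfolding basis_def by blast
    have "card T \<le> m" if "T \<subseteq> {0..<length \<beta>}" "smp ((!) \<beta>) T" for T
    proof -
      have "T \<noteq> {0..<length \<beta>}" using that b(2) by auto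
      then show ?thesis using bnd[OF b(1) that(1) _ that(2)] by blast
    qed
    then show "\<beta> \<in> Dm m" unfolding Dm_def using perm_distinct[OF bp] by blast
  qed
  have f2: "finite B2"
  proof (rule ccontr)
    assume "infinite B2"
    then obtain f :: "nat \<Rightarrow> nat list" where f: "inj f" "range f \<subseteq> B2" using infinite_countable_subset by blast
    then have "\<forall>i. f i \<in> Dm m" using B2D by blast
    then obtain i j where ij: "i < j" "f i \<preceq> f j" using D_wqo by blast
    have fi: "f i \<in> basis C" "f j \<in> basis C" using f unfolding B2_def by auto
    have "f i \<noteq> f j" using f(1) ij(1) by (metis inj_eq less_irrefl)
    moreover have "is_perm (f i)" using fi unfolding basis_def by blast
    ultimately have "f i \<in> C" using fi(2) ij(2) unfolding basis_def by blast
    then show False using fi(1) unfolding basis_def by blast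
  qed
  have "basis C = B1 \<union> B2" unfolding B1_def B2_def by auto
  then show ?thesis using f1 f2 by simp
qed

end
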